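(* Let $A$ be a twisted differential operator of order $2$ with source $\tilde A$, let $b\in\mathcal B$, and let $B=b_{20}D^2+b_{11}MD+b_{02}M^2+b_{10}D+b_{01}M+b_{00}I$ be the operator with Weyl symbol $b$, with transpose $B'$. Then: $\ker\tilde A=0$ iff $\ker B=0$; $\tilde A$ is globally regular iff $B$ is globally regular; $(\tilde A)'$ is globally regular iff $B'$ is globally regular.
   Context: $D=-\mathrm i\,d/dx$, $M$ = multiplication by $x$ on $\mathcal S'(\mathbb R)$; $D_x,D_y=-\mathrm i\partial_x,-\mathrm i\partial_y$, $M_x,M_y$ multiplication by $x,y$ on $\mathbb R^2$. Globally regular: $u\in\mathcal S'$, $Pu\in\mathcal S$ imply $u\in\mathcal S$. Kernels are in $\mathcal S'(\mathbb R)$. A twisted differential operator of order $2$ is $A=\sum_{j+k\le 2}(-1)^{j+k}a_{kj}(\alpha D_y-\beta M_x)^j(\gamma D_x-\delta M_y)^k$ with $\alpha,\beta,\gamma,\delta\in\mathbb R$, $\alpha\delta-\beta\gamma=1$, $\beta\delta\ne0$, $a_{kj}\in\mathbb C$, $|a_{20}|+|a_{11}|+|a_{02}|\ne0$; its source is $\tilde A=\sum_{j+k\le2}a_{kj}M^jD^k$, and the transpose of $\sum c_{kj}M^jD^k$ is $\sum(-1)^kc_{kj}D^kM^j$. The Weyl symbol of $P=p_{20}D^2+p_{11}MD+p_{02}M^2+p_{10}D+p_{01}M+p_{00}I$ is $p_{20}\xi^2+p_{11}x\xi+p_{02}x^2+p_{10}\xi+p_{01}x+p_{00}+\frac{\mathrm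 i}2p_{11}$. Polynomials $p,q$ are symplectically equivalent if $q=p\circ\chi$ for a linear map $\chi$ of $\mathbb R^2$ of determinant $1$. $\mathcal B$ is the set of polynomials $b(x,\xi)=b_{20}\xi^2+b_{11}x\xi+b_{02}x^2+b_{10}\xi+b_{01}x+b_{00}+\frac{\mathrm i}2b_{11}$ with $b_{20}\ne0$ symplectically equivalent to the Weyl symbol of $\tilde A$. *)

theory Defs
  imports "HOL-Analysis.Analysis"
begin

fun dn :: "nat \<Rightarrow> (real \<Rightarrow> complex) \<Rightarrow> real \<Rightarrow> complex" where
  "dn 0 f = f"
| "dn (Suc k) f = (\<lambda>x. vector_derivative (dn k f) (at x))"

definition schwartz :: "(real \<Rightarrow> complex) set" where
  "schwartz = {f. (\<forall>k x. (dn k f has_vector_derivative dn (Suc k) f x) (at x)) \<and>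
                  (\<forall>j k. \<exists>C. \<forall>x. norm (complex_of_real x ^ j * dn k f x) \<le> C)}"

(* tempered distributions: continuous linear functionals on S(R);
   only their values on S(R) are meaningful *)
definition tempered :: "((real \<Rightarrow> complex) \<Rightarrow> complex) \<Rightarrow> bool" where
  "tempered u \<longleftrightarrow>
     (\<forall>\<phi>\<in>schwartz. \<forall>\<psi>\<in>schwartz. u (\<lambda>x. \<phi> x + \<psi> x) = u \<phi> + u \<psi>) \<and>
     (\<forall>\<phi>\<in>schwartz. \<forall>c. u (\<lambda>x. c * \<phi> x) = c * u \<phi>) \<and>
     (\<exists>C N. \<forall>\<phi>\<in>schwartz. norm (u \<phi>) \<le>
        C * (\<Sum>j\<le>N. \<Sum>k\<le>N. (SUP x. norm (complex_of_real x ^ j * dn k \<phi> x))))"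

definition in_S :: "((real \<Rightarrow> complex) \<Rightarrow> complex) \<Rightarrow> bool" where
  "in_S u \<longleftrightarrow> (\<exists>f\<in>schwartz. \<forall>\<phi>\<in>schwartz. u \<phi> = (LINT x|lborel. f x * \<phi> x))"

(* D = -i d/dx and M = multiplication by x on S'(R) *)
definition Dop :: "((real \<Rightarrow> complex) \<Rightarrow> complex) \<Rightarrow> (real \<Rightarrow> complex) \<Rightarrow> complex" where
  "Dop u = (\<lambda>\<phi>. \<i> * u (\<lambda>x. vector_derivative \<phi> (at x)))"

definition Mop :: "((real \<Rightarrow> complex) \<Rightarrow> complex) \<Rightarrow> (real \<Rightarrow> complex) \<Rightarrow> complex" where
  "Mop u = (\<lambda>\<phi>. u (\<lambda>x. complex_of_real x * \<phi> x))"

definition op_of :: "(nat \<Rightarrow> nat \<Rightarrow> complex) \<Rightarrow>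
     ((real \<Rightarrow> complex) \<Rightarrow> complex) \<Rightarrow> (real \<Rightarrow> complex) \<Rightarrow> complex" where
  "op_of c u = (\<lambda>\<phi>. \<Sum>k\<le>2. \<Sum>j\<le>2 - k. c k j * (Mop ^^ j) ((Dop ^^ k) u) \<phi>)"

definition op_transpose :: "(nat \<Rightarrow> nat \<Rightarrow> complex) \<Rightarrow>
     ((real \<Rightarrow> complex) \<Rightarrow> complex) \<Rightarrow> (real \<Rightarrow> complex) \<Rightarrow> complex" where
  "op_transpose c u = (\<lambda>\<phi>. \<Sum>k\<le>2. \<Sum>j\<le>2 - k. (-1) ^ k * c k j * (Dop ^^ k) ((Mop ^^ j) u) \<phi>)"

definition kernel_trivial :: "(((real \<Rightarrow> complex) \<Rightarrow> complex) \<Rightarrow> (real \<Rightarrow> complex) \<Rightarrow> complex) \<Rightarrow> bool" where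
  "kernel_trivial P \<longleftrightarrow> (\<forall>u. tempered u \<longrightarrow> (\<forall>\<phi>\<in>schwartz. P u \<phi> = 0) \<longrightarrow> (\<forall>\<phi>\<in>schwartz. u \<phi> = 0))"

definition globally_regular :: "(((real \<Rightarrow> complex) \<Rightarrow> complex) \<Rightarrow> (real \<Rightarrow> complex) \<Rightarrow> complex) \<Rightarrow> bool" where
  "globally_regular P \<longleftrightarrow> (\<forall>u. tempered u \<longrightarrow> in_S (P u) \<longrightarrow> in_S u)"

definition weyl_symbol :: "(nat \<Rightarrow> nat \<Rightarrow> complex) \<Rightarrow> real \<Rightarrow> real \<Rightarrow> complex" where
  "weyl_symbol c x \<xi> = c 2 0 * \<xi>^2 + c 1 1 * x * \<xi> + c 0 2 * x^2 + c 1 0 * \<xi> + c 0 1 * x + c 0 0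
      + (\<i> / 2) * c 1 1"

definition sympl_equiv :: "(real \<Rightarrow> real \<Rightarrow> complex) \<Rightarrow> (real \<Rightarrow> real \<Rightarrow> complex) \<Rightarrow> bool" where
  "sympl_equiv p q \<longleftrightarrow> (\<exists>m11 m12 m21 m22 :: real. m11 * m22 - m12 * m21 = 1 \<and>
       (\<forall>x \<xi>. q x \<xi> = p (m11 * x + m12 * \<xi>) (m21 * x + m22 * \<xi>)))"

end

theory Submission
  imports Defs "HOL-Probability.Probability" "HOL-Real_Asymp.Real_Asymp"
begin


lemma dn_Suc': "dn (Suc k) f = dn k (dn 1 f)"
  by (induction k arbitrary: f) auto

definition sn :: "nat \<Rightarrow> nat \<Rightarrow> (real \<Rightarrow> complex) \<Rightarrow> real" where
  "sn j k \<phi> = (SUP x. norm (complex_of_real x ^ j * dn k \<phi> x))"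

definition ssum :: "nat \<Rightarrow> (real \<Rightarrow> complex) \<Rightarrow> real" where
  "ssum N \<phi> = (\<Sum>j\<le>N. \<Sum>k\<le>N. sn j k \<phi>)"

definition smap :: "((real \<Rightarrow> complex) \<Rightarrow> (real \<Rightarrow> complex)) \<Rightarrow> bool" where
  "smap A \<longleftrightarrow> (\<forall>\<phi>\<in>schwartz. A \<phi> \<in> schwartz) \<and>
     (\<forall>j k. \<exists>C N. \<forall>\<phi>\<in>schwartz. sn j k (A \<phi>) \<le> C * ssum N \<phi>)"

lemma schwartz_deriv: "\<phi> \<in> schwartz \<Longrightarrow> (dn k \<phi> has_vector_derivative dn (Suc k) \<phi> x) (at x)"
  unfolding schwartz_def by blast

lemma schwartz_bdd: "\<phi> \<in> schwartz \<Longrightarrow> bdd_above (range (\<lambda>x. norm (complex_of_real x ^ j * dn k \<phi> x)))"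
proof -
  assume "\<phi> \<in> schwartz"
  then obtain C where "\<forall>x. norm (complex_of_real x ^ j * dn k \<phi> x) \<le> C" unfolding schwartz_def by blast
  then show ?thesis by (intro bdd_aboveI2) auto
qed

lemma schwartz_deriv': "\<phi> \<in> schwartz \<Longrightarrow> (dn k \<phi> has_vector_derivative vector_derivative (dn k \<phi>) (at x)) (at x)"
  using schwartz_deriv[of \<phi> k x] by simp

lemma sn_upper: "\<phi> \<in> schwartz \<Longrightarrow> norm (complex_of_real x ^ j * dn k \<phi> x) \<le> sn j k \<phi>"
  unfolding sn_def by (rule cSUP_upper[OF _ schwartz_bdd]) auto

lemma sn_nonneg: "\<phi> \<in> schwartz \<Longrightarrow> 0 \<le> sn j k \<phi>"
  using sn_upper[of \<phi> 0 j k] norm_ge_zero order_trans by blast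

lemma sn_least: "(\<And>x. norm (complex_of_real x ^ j * dn k \<phi> x) \<le> B) \<Longrightarrow> sn j k \<phi> \<le> B"
  unfolding sn_def by (rule cSUP_least) auto

lemma ssum_nonneg: "\<phi> \<in> schwartz \<Longrightarrow> 0 \<le> ssum N \<phi>"
  unfolding ssum_def by (intro sum_nonneg) (auto simp: sn_nonneg)

lemma sn_le_ssum: "\<phi> \<in> schwartz \<Longrightarrow> j \<le> N \<Longrightarrow> k \<le> N \<Longrightarrow> sn j k \<phi> \<le> ssum N \<phi>"
proof -
  assume a: "\<phi> \<in> schwartz" "j \<le> N" "k \<le> N"
  have "sn j k \<phi> \<le> (\<Sum>k\<le>N. sn j k \<phi>)"
    using a by (intro member_le_sum) (auto simp: sn_nonneg)
  also have "\<dots> \<le> ssum N \<phi>" unfolding ssum_def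
    using a by (intro member_le_sum[where f="\<lambda>j. \<Sum>k\<le>N. sn j k \<phi>"]) (auto intro!: sum_nonneg simp: sn_nonneg)
  finally show ?thesis .
qed

lemma ssum_mono: "\<phi> \<in> schwartz \<Longrightarrow> N \<le> N' \<Longrightarrow> ssum N \<phi> \<le> ssum N' \<phi>"
proof -
  assume a: "\<phi> \<in> schwartz" "N \<le> N'"
  have "ssum N \<phi> \<le> (\<Sum>j\<le>N. \<Sum>k\<le>N'. sn j k \<phi>)" unfolding ssum_def
    using a by (intro sum_mono sum_mono2) (auto simp: sn_nonneg)
  also have "\<dots> \<le> ssum N' \<phi>" unfolding ssum_def
    using a by (intro sum_mono2) (auto intro!: sum_nonneg simp: sn_nonneg)
  finally show ?thesis .
qed

lemma schwartzI:
  assumes "\<And>k x. (dn k \<phi> has_vector_derivative dn (Suc k) \<phi> x) (at x)"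
    and "\<And>j k. \<exists>C. \<forall>x. norm (complex_of_real x ^ j * dn k \<phi> x) \<le> C"
  shows "\<phi> \<in> schwartz"
  using assms unfolding schwartz_def by blast

lemma dn1_eq: "(f has_vector_derivative f') (at x) \<Longrightarrow> dn 1 f x = f'"
  by (simp add: vector_derivative_at)

lemma schwartz_cont: "\<phi> \<in> schwartz \<Longrightarrow> continuous_on UNIV (dn k \<phi>)"
  by (metis continuous_at_imp_continuous_on has_vector_derivative_continuous schwartz_deriv)

lemma schwartz_dn1: "\<phi> \<in> schwartz \<Longrightarrow> dn 1 \<phi> \<in> schwartz"
proof (rule schwartzI)
  assume a: "\<phi> \<in> schwartz"
  show "(dn k (dn 1 \<phi>) has_vector_derivative dn (Suc k) (dn 1 \<phi>) x) (at x)" for k x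
    using schwartz_deriv[OF a, of "Suc k" x] by (simp only: dn_Suc'[symmetric])
  show "\<exists>C. \<forall>x. norm (complex_of_real x ^ j * dn k (dn 1 \<phi>) x) \<le> C" for j k
    using sn_upper[OF a, of _ j "Suc k"] by (auto simp only: dn_Suc'[symmetric])
qed

lemma sn_dn1: "sn j k (dn 1 \<phi>) = sn j (Suc k) \<phi>"
  unfolding sn_def by (simp only: dn_Suc'[symmetric])

lemma dn_add:
  assumes "\<phi> \<in> schwartz" "\<psi> \<in> schwartz"
  shows "dn k (\<lambda>x. \<phi> x + \<psi> x) = (\<lambda>x. dn k \<phi> x + dn k \<psi> x)"
proof (induction k)
  case 0 then show ?case by simp
next
  case (Suc k)
  show ?case
    by (rule ext, simp only: dn.simps Suc, rule vector_derivative_at,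
        intro has_vector_derivative_add schwartz_deriv' assms)
qed

lemma dn_cmult:
  assumes "\<phi> \<in> schwartz"
  shows "dn k (\<lambda>x. c * \<phi> x) = (\<lambda>x. c * dn k \<phi> x)"
proof (induction k)
  case 0 then show ?case by simp
next
  case (Suc k)
  show ?case
    by (rule ext, simp only: dn.simps Suc, rule vector_derivative_at,
        intro has_vector_derivative_mult_right schwartz_deriv' assms)
qed

lemma dn_xmult:
  assumes "\<phi> \<in> schwartz"
  shows "dn k (\<lambda>x. complex_of_real x * \<phi> x) = (\<lambda>x. complex_of_real x * dn k \<phi> x + of_nat k * dn (k - 1) \<phi> x)"
proof (induction k)
  case 0 then show ?case by simp
next
  case (Suc k)
  have d1: "((\<lambda>x. complex_of_real x) has_vector_derivative 1) (at x)" for x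
    using has_vector_derivative_of_real[OF DERIV_ident, of "at x"] by simp
  have d2: "((\<lambda>x. of_nat k * dn (k - 1) \<phi> x) has_vector_derivative of_nat k * dn k \<phi> x) (at x)" for x
  proof (cases k)
    case 0 then show ?thesis by simp
  next
    case (Suc m) then show ?thesis
      using has_vector_derivative_mult_right[OF schwartz_deriv[OF assms, of m x], of "of_nat k"] by simp
  qed
  show ?case
    apply (rule ext, simp only: dn.simps Suc)
    apply (rule vector_derivative_at)
    apply (rule has_vector_derivative_eq_rhs)
     apply (rule has_vector_derivative_add[OF has_vector_derivative_mult[OF d1 schwartz_deriv[OF assms]] d2])
    apply (simp add: algebra_simps)
    done
qed


lemma smap_ssum:
  assumes "smap A"
  shows "\<exists>C N'. \<forall>\<phi>\<in>schwartz. ssum N (A \<phi>) \<le> C * ssum N' \<phi>"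
proof -
  from assms have "\<forall>j k. \<exists>C N. \<forall>\<phi>\<in>schwartz. sn j k (A \<phi>) \<le> C * ssum N \<phi>"
    unfolding smap_def by blast
  then obtain Cf Nf where CN: "\<And>j k \<phi>. \<phi> \<in> schwartz \<Longrightarrow> sn j k (A \<phi>) \<le> Cf j k * ssum (Nf j k) \<phi>"
    by metis
  define N' where "N' = (\<Sum>j\<le>N. \<Sum>k\<le>N. Nf j k)"
  define C where "C = (\<Sum>j\<le>N. \<Sum>k\<le>N. \<bar>Cf j k\<bar>)"
  have Nle: "Nf j k \<le> N'" if "j \<le> N" "k \<le> N" for j k
  proof -
    have "Nf j k \<le> (\<Sum>k\<le>N. Nf j k)" using that by (intro member_le_sum) auto
    also have "\<dots> \<le> N'" unfolding N'_def using that
      by (intro member_le_sum[where f="\<lambda>j. \<Sum>k\<le>N. Nf j k"]) auto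
    finally show ?thesis .
  qed
  have "ssum N (A \<phi>) \<le> C * ssum N' \<phi>" if \<phi>: "\<phi> \<in> schwartz" for \<phi>
  proof -
    have "ssum N (A \<phi>) \<le> (\<Sum>j\<le>N. \<Sum>k\<le>N. \<bar>Cf j k\<bar> * ssum N' \<phi>)"
      unfolding ssum_def[of N]
    proof (intro sum_mono)
      fix j k assume jk: "j \<in> {..N}" "k \<in> {..N}"
      have "sn j k (A \<phi>) \<le> Cf j k * ssum (Nf j k) \<phi>" using CN[OF \<phi>] .
      also have "\<dots> \<le> \<bar>Cf j k\<bar> * ssum (Nf j k) \<phi>"
        using ssum_nonneg[OF \<phi>] by (intro mult_right_mono) auto
      also have "\<dots> \<le> \<bar>Cf j k\<bar> * ssum N' \<phi>"
        using jk Nle by (intro mult_left_mono ssum_mono[OF \<phi>]) auto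
      finally show "sn j k (A \<phi>) \<le> \<bar>Cf j k\<bar> * ssum N' \<phi>" .
    qed
    also have "\<dots> = C * ssum N' \<phi>" unfolding C_def by (simp add: sum_distrib_right)
    finally show ?thesis .
  qed
  then show ?thesis by blast
qed

lemma bound_compose:
  assumes "\<And>\<phi>. \<phi> \<in> schwartz \<Longrightarrow> X \<phi> \<le> C * ssum N (D \<phi>)" "smap D"
  shows "\<exists>C' N'. \<forall>\<phi>\<in>schwartz. X \<phi> \<le> C' * ssum N' \<phi>"
proof -
  obtain C1 N1 where c1: "\<forall>\<phi>\<in>schwartz. ssum N (D \<phi>) \<le> C1 * ssum N1 \<phi>"
    using smap_ssum[OF assms(2)] by blast
  have "X \<phi> \<le> (\<bar>C\<bar> * C1) * ssum N1 \<phi>" if \<phi>: "\<phi> \<in> schwartz" for \<phi>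
  proof -
    have D\<phi>: "D \<phi> \<in> schwartz" using assms(2) \<phi> unfolding smap_def by blast
    have "X \<phi> \<le> C * ssum N (D \<phi>)" using assms(1)[OF \<phi>] .
    also have "\<dots> \<le> \<bar>C\<bar> * ssum N (D \<phi>)" using ssum_nonneg[OF D\<phi>] by (intro mult_right_mono) auto
    also have "\<dots> \<le> \<bar>C\<bar> * (C1 * ssum N1 \<phi>)" using c1 \<phi> by (intro mult_left_mono) auto
    finally show ?thesis by simp
  qed
  then show ?thesis by blast
qed

lemma smapD1: "smap A \<Longrightarrow> \<phi> \<in> schwartz \<Longrightarrow> A \<phi> \<in> schwartz"
  unfolding smap_def by blast

lemma smap_comp:
  assumes "smap A" "smap B"
  shows "smap (\<lambda>\<phi>. A (B \<phi>))"
  unfolding smap_def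
proof (intro conjI allI ballI)
  show "\<phi> \<in> schwartz \<Longrightarrow> A (B \<phi>) \<in> schwartz" for \<phi> using assms smapD1 by blast
  fix j k
  obtain C N where "\<forall>\<phi>\<in>schwartz. sn j k (A \<phi>) \<le> C * ssum N \<phi>" using assms(1) unfolding smap_def by blast
  then have "\<phi> \<in> schwartz \<Longrightarrow> sn j k (A (B \<phi>)) \<le> C * ssum N (B \<phi>)" for \<phi>
    using assms(2) smapD1 by blast
  from bound_compose[OF this assms(2)]
  show "\<exists>C N. \<forall>\<phi>\<in>schwartz. sn j k (A (B \<phi>)) \<le> C * ssum N \<phi>" .
qed

lemma schwartz_cmult: "\<phi> \<in> schwartz \<Longrightarrow> (\<lambda>x. c * \<phi> x) \<in> schwartz"
proof (rule schwartzI)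
  assume a: "\<phi> \<in> schwartz"
  show "(dn k (\<lambda>x. c * \<phi> x) has_vector_derivative dn (Suc k) (\<lambda>x. c * \<phi> x) x) (at x)" for k x
    unfolding dn_cmult[OF a] by (intro has_vector_derivative_mult_right schwartz_deriv a)
  show "\<exists>C. \<forall>x. norm (complex_of_real x ^ j * dn k (\<lambda>x. c * \<phi> x) x) \<le> C" for j k
  proof (intro exI allI)
    fix x
    have "norm (complex_of_real x ^ j * dn k (\<lambda>x. c * \<phi> x) x) = norm c * norm (complex_of_real x ^ j * dn k \<phi> x)"
      unfolding dn_cmult[OF a] by (simp add: norm_mult)
    also have "\<dots> \<le> norm c * sn j k \<phi>" by (intro mult_left_mono sn_upper a) auto
    finally show "norm (complex_of_real x ^ j * dn k (\<lambda>x. c * \<phi> x) x) \<le> norm c * sn j k \<phi>" .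
  qed
qed

lemma schwartz_add: "\<phi> \<in> schwartz \<Longrightarrow> \<psi> \<in> schwartz \<Longrightarrow> (\<lambda>x. \<phi> x + \<psi> x) \<in> schwartz"
proof (rule schwartzI)
  assume a: "\<phi> \<in> schwartz" and b: "\<psi> \<in> schwartz"
  show "(dn k (\<lambda>x. \<phi> x + \<psi> x) has_vector_derivative dn (Suc k) (\<lambda>x. \<phi> x + \<psi> x) x) (at x)" for k x
    unfolding dn_add[OF a b] by (intro has_vector_derivative_add schwartz_deriv a b)
  show "\<exists>C. \<forall>x. norm (complex_of_real x ^ j * dn k (\<lambda>x. \<phi> x + \<psi> x) x) \<le> C" for j k
  proof (intro exI allI)
    fix x
    have "norm (complex_of_real x ^ j * dn k (\<lambda>x. \<phi> x + \<psi> x) x) \<le> norm (complex_of_real x ^ j * dn k \<phi> x) + norm (complex_of_real x ^ j * dn k \<psi> x)"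
      unfolding dn_add[OF a b] by (metis distrib_left norm_triangle_ineq)
    also have "\<dots> \<le> sn j k \<phi> + sn j k \<psi>" by (intro add_mono sn_upper a b)
    finally show "norm (complex_of_real x ^ j * dn k (\<lambda>x. \<phi> x + \<psi> x) x) \<le> sn j k \<phi> + sn j k \<psi>" .
  qed
qed

lemma schwartz_lin: "\<phi> \<in> schwartz \<Longrightarrow> \<psi> \<in> schwartz \<Longrightarrow> (\<lambda>x. a * \<phi> x + b * \<psi> x) \<in> schwartz"
  by (intro schwartz_add schwartz_cmult)

lemma dn_lin: "\<phi> \<in> schwartz \<Longrightarrow> \<psi> \<in> schwartz \<Longrightarrow> dn k (\<lambda>x. a * \<phi> x + b * \<psi> x) = (\<lambda>x. a * dn k \<phi> x + b * dn k \<psi> x)"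
  by (simp add: dn_add schwartz_cmult dn_cmult)

lemma smap_lin:
  assumes "smap A" "smap B"
  shows "smap (\<lambda>\<phi> x. a * A \<phi> x + b * B \<phi> x)"
  unfolding smap_def
proof (intro conjI allI ballI)
  show "\<phi> \<in> schwartz \<Longrightarrow> (\<lambda>x. a * A \<phi> x + b * B \<phi> x) \<in> schwartz" for \<phi>
    using assms smapD1 schwartz_lin by blast
  fix j k
  obtain C1 N1 where 1: "\<forall>\<phi>\<in>schwartz. sn j k (A \<phi>) \<le> C1 * ssum N1 \<phi>" using assms(1) unfolding smap_def by blast
  obtain C2 N2 where 2: "\<forall>\<phi>\<in>schwartz. sn j k (B \<phi>) \<le> C2 * ssum N2 \<phi>" using assms(2) unfolding smap_def by blast
  have "sn j k (\<lambda>x. a * A \<phi> x + b * B \<phi> x) \<le> (norm a * \<bar>C1\<bar> + norm b * \<bar>C2\<bar>) * ssum (max N1 N2) \<phi>"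
    if \<phi>: "\<phi> \<in> schwartz" for \<phi>
  proof (rule sn_least)
    fix x
    have A\<phi>: "A \<phi> \<in> schwartz" and B\<phi>: "B \<phi> \<in> schwartz" using assms \<phi> smapD1 by auto
    have "norm (complex_of_real x ^ j * dn k (\<lambda>x. a * A \<phi> x + b * B \<phi> x) x)
        \<le> norm a * norm (complex_of_real x ^ j * dn k (A \<phi>) x) + norm b * norm (complex_of_real x ^ j * dn k (B \<phi>) x)"
      unfolding dn_lin[OF A\<phi> B\<phi>]
      by (metis (no_types, lifting) distrib_left mult.left_commute norm_mult norm_triangle_ineq)
    also have "\<dots> \<le> norm a * (\<bar>C1\<bar> * ssum (max N1 N2) \<phi>) + norm b * (\<bar>C2\<bar> * ssum (max N1 N2) \<phi>)"
    proof (intro add_mono mult_left_mono)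
      have "norm (complex_of_real x ^ j * dn k (A \<phi>) x) \<le> sn j k (A \<phi>)" by (rule sn_upper[OF A\<phi>])
      also have "\<dots> \<le> C1 * ssum N1 \<phi>" using 1 \<phi> by blast
      also have "\<dots> \<le> \<bar>C1\<bar> * ssum N1 \<phi>" using ssum_nonneg[OF \<phi>] by (intro mult_right_mono) auto
      also have "\<dots> \<le> \<bar>C1\<bar> * ssum (max N1 N2) \<phi>" by (intro mult_left_mono ssum_mono \<phi>) auto
      finally show "norm (complex_of_real x ^ j * dn k (A \<phi>) x) \<le> \<bar>C1\<bar> * ssum (max N1 N2) \<phi>" .
      have "norm (complex_of_real x ^ j * dn k (B \<phi>) x) \<le> sn j k (B \<phi>)" by (rule sn_upper[OF B\<phi>])
      also have "\<dots> \<le> C2 * ssum N2 \<phi>" using 2 \<phi> by blast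
      also have "\<dots> \<le> \<bar>C2\<bar> * ssum N2 \<phi>" using ssum_nonneg[OF \<phi>] by (intro mult_right_mono) auto
      also have "\<dots> \<le> \<bar>C2\<bar> * ssum (max N1 N2) \<phi>" by (intro mult_left_mono ssum_mono \<phi>) auto
      finally show "norm (complex_of_real x ^ j * dn k (B \<phi>) x) \<le> \<bar>C2\<bar> * ssum (max N1 N2) \<phi>" .
    qed auto
    also have "\<dots> = (norm a * \<bar>C1\<bar> + norm b * \<bar>C2\<bar>) * ssum (max N1 N2) \<phi>" by (simp add: algebra_simps)
    finally show "norm (complex_of_real x ^ j * dn k (\<lambda>x. a * A \<phi> x + b * B \<phi> x) x) \<le> (norm a * \<bar>C1\<bar> + norm b * \<bar>C2\<bar>) * ssum (max N1 N2) \<phi>" .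
  qed
  then show "\<exists>C N. \<forall>\<phi>\<in>schwartz. sn j k (\<lambda>x. a * A \<phi> x + b * B \<phi> x) \<le> C * ssum N \<phi>" by blast
qed

lemma smap_id: "smap (\<lambda>\<phi>. \<phi>)"
  unfolding smap_def
proof (intro conjI allI ballI)
  fix j k
  have "\<phi> \<in> schwartz \<Longrightarrow> sn j k \<phi> \<le> 1 * ssum (j + k) \<phi>" for \<phi> by (simp add: sn_le_ssum)
  then show "\<exists>C N. \<forall>\<phi>\<in>schwartz. sn j k \<phi> \<le> C * ssum N \<phi>" by blast
qed auto

lemma smap_dn1: "smap (dn 1)"
  unfolding smap_def
proof (intro conjI allI ballI)
  fix j k
  have "\<phi> \<in> schwartz \<Longrightarrow> sn j k (dn 1 \<phi>) \<le> 1 * ssum (j + Suc k) \<phi>" for \<phi>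
    by (simp only: sn_dn1 mult_1) (rule sn_le_ssum; simp)
  then show "\<exists>C N. \<forall>\<phi>\<in>schwartz. sn j k (dn 1 \<phi>) \<le> C * ssum N \<phi>" by blast
qed (use schwartz_dn1 in auto)

lemma xmult_bound:
  assumes a: "\<phi> \<in> schwartz"
  shows "norm (complex_of_real x ^ j * dn k (\<lambda>x. complex_of_real x * \<phi> x) x) \<le> sn (Suc j) k \<phi> + of_nat k * sn j (k - 1) \<phi>"
proof -
  have "norm (complex_of_real x ^ j * dn k (\<lambda>x. complex_of_real x * \<phi> x) x)
     = norm (complex_of_real x ^ Suc j * dn k \<phi> x + of_nat k * (complex_of_real x ^ j * dn (k - 1) \<phi> x))"
    unfolding dn_xmult[OF a] by (simp add: algebra_simps)
  also have "\<dots> \<le> norm (complex_of_real x ^ Suc j * dn k \<phi> x) + of_nat k * norm (complex_of_real x ^ j * dn (k - 1) \<phi> x)"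
    by (metis norm_triangle_ineq norm_mult norm_of_nat)
  also have "\<dots> \<le> sn (Suc j) k \<phi> + of_nat k * sn j (k - 1) \<phi>"
    by (intro add_mono mult_left_mono sn_upper a) auto
  finally show ?thesis .
qed

lemma schwartz_xmult: "\<phi> \<in> schwartz \<Longrightarrow> (\<lambda>x. complex_of_real x * \<phi> x) \<in> schwartz"
proof (rule schwartzI)
  assume a: "\<phi> \<in> schwartz"
  have d1: "((\<lambda>x. complex_of_real x) has_vector_derivative 1) (at x)" for x
    using has_vector_derivative_of_real[OF DERIV_ident, of "at x"] by simp
  show "(dn k (\<lambda>x. complex_of_real x * \<phi> x) has_vector_derivative dn (Suc k) (\<lambda>x. complex_of_real x * \<phi> x) x) (at x)" for k x
  proof -
    have d2: "((\<lambda>x. of_nat k * dn (k - 1) \<phi> x) has_vector_derivative of_nat k * dn k \<phi> x) (at x)"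
    proof (cases k)
      case 0 then show ?thesis by simp
    next
      case (Suc m) then show ?thesis
        using has_vector_derivative_mult_right[OF schwartz_deriv[OF a, of m x], of "of_nat k"] by simp
    qed
    show ?thesis unfolding dn_xmult[OF a]
      apply (rule has_vector_derivative_eq_rhs)
       apply (rule has_vector_derivative_add[OF has_vector_derivative_mult[OF d1 schwartz_deriv[OF a]] d2])
      apply (simp add: algebra_simps)
      done
  qed
  show "\<exists>C. \<forall>x. norm (complex_of_real x ^ j * dn k (\<lambda>x. complex_of_real x * \<phi> x) x) \<le> C" for j k
    using xmult_bound[OF a] by blast
qed

lemma smap_x: "smap (\<lambda>\<phi> x. complex_of_real x * \<phi> x)"
  unfolding smap_def
proof (intro conjI allI ballI)
  fix j k
  have "sn j k (\<lambda>x. complex_of_real x * \<phi> x) \<le> (1 + of_nat k) * ssum (j + k + 1) \<phi>" if a: "\<phi> \<in> schwartz" for \<phi>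
  proof (rule sn_least)
    fix x
    have "norm (complex_of_real x ^ j * dn k (\<lambda>x. complex_of_real x * \<phi> x) x) \<le> sn (Suc j) k \<phi> + of_nat k * sn j (k - 1) \<phi>"
      by (rule xmult_bound[OF a])
    also have "\<dots> \<le> ssum (j + k + 1) \<phi> + of_nat k * ssum (j + k + 1) \<phi>"
      by (intro add_mono mult_left_mono sn_le_ssum a) auto
    finally show "norm (complex_of_real x ^ j * dn k (\<lambda>x. complex_of_real x * \<phi> x) x) \<le> (1 + of_nat k) * ssum (j + k + 1) \<phi>"
      by (simp add: algebra_simps)
  qed
  then show "\<exists>C N. \<forall>\<phi>\<in>schwartz. sn j k (\<lambda>x. complex_of_real x * \<phi> x) \<le> C * ssum N \<phi>" by blast
qed (simp add: schwartz_xmult)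

lemma smap_transfer:
  assumes D: "\<And>\<phi> x. \<phi> \<in> schwartz \<Longrightarrow> (A \<phi> has_vector_derivative A (D \<phi>) x) (at x)" and sD: "smap D"
    and E: "\<And>\<phi>. \<phi> \<in> schwartz \<Longrightarrow> (\<lambda>x. complex_of_real x * A \<phi> x) = A (E \<phi>)" and sE: "smap E"
    and base: "\<exists>C N. \<forall>\<phi>\<in>schwartz. \<forall>x. norm (A \<phi> x) \<le> C * ssum N \<phi>"
  shows "smap A"
proof -
  have dA: "dn 1 (A \<phi>) = A (D \<phi>)" if "\<phi> \<in> schwartz" for \<phi>
    using D[OF that] by (auto intro!: ext vector_derivative_at)
  have smooth: "\<forall>\<phi>\<in>schwartz. \<forall>x. (dn k (A \<phi>) has_vector_derivative dn (Suc k) (A \<phi>) x) (at x)" for k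
  proof (induction k)
    case 0 show ?case using D dA by (simp del: dn.simps add: dn.simps(1))
  next
    case (Suc k)
    show ?case
    proof (intro ballI allI)
      fix \<phi> x assume \<phi>: "\<phi> \<in> schwartz"
      have "D \<phi> \<in> schwartz" using sD \<phi> smapD1 by blast
      then have "(dn k (A (D \<phi>)) has_vector_derivative dn (Suc k) (A (D \<phi>)) x) (at x)" using Suc by blast
      then show "(dn (Suc k) (A \<phi>) has_vector_derivative dn (Suc (Suc k)) (A \<phi>) x) (at x)"
        by (metis dn_Suc' dA \<phi>)
    qed
  qed
  have jb: "\<exists>C N. \<forall>\<phi>\<in>schwartz. \<forall>x. norm (complex_of_real x ^ j * A \<phi> x) \<le> C * ssum N \<phi>" for j
  proof (induction j)
    case 0 then show ?case using base by simp
  next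
    case (Suc j)
    then obtain C N where CN: "\<forall>\<phi>\<in>schwartz. \<forall>x. norm (complex_of_real x ^ j * A \<phi> x) \<le> C * ssum N \<phi>" by blast
    have "\<exists>C' N'. \<forall>\<phi>\<in>schwartz. norm (complex_of_real x ^ Suc j * A \<phi> x) \<le> C' * ssum N' \<phi>" for x
    proof -
      have "\<phi> \<in> schwartz \<Longrightarrow> norm (complex_of_real x ^ Suc j * A \<phi> x) \<le> C * ssum N (E \<phi>)" for \<phi>
      proof -
        assume \<phi>: "\<phi> \<in> schwartz"
        have "complex_of_real x ^ Suc j * A \<phi> x = complex_of_real x ^ j * A (E \<phi>) x"
          using fun_cong[OF E[OF \<phi>], of x] by (simp add: algebra_simps)
        then show ?thesis using CN sE \<phi> smapD1 by metis
      qed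
      from bound_compose[OF this sE] show ?thesis .
    qed
    (* need uniformity in x *)
    obtain C1 N1 where c1: "\<forall>\<phi>\<in>schwartz. ssum N (E \<phi>) \<le> C1 * ssum N1 \<phi>"
      using smap_ssum[OF sE] by blast
    have "norm (complex_of_real x ^ Suc j * A \<phi> x) \<le> (\<bar>C\<bar> * C1) * ssum N1 \<phi>" if \<phi>: "\<phi> \<in> schwartz" for \<phi> x
    proof -
      have E\<phi>: "E \<phi> \<in> schwartz" using sE \<phi> smapD1 by blast
      have "complex_of_real x ^ Suc j * A \<phi> x = complex_of_real x ^ j * A (E \<phi>) x"
        using fun_cong[OF E[OF \<phi>], of x] by (simp add: algebra_simps)
      then have "norm (complex_of_real x ^ Suc j * A \<phi> x) \<le> C * ssum N (E \<phi>)" using CN E\<phi> by metis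
      also have "\<dots> \<le> \<bar>C\<bar> * ssum N (E \<phi>)" using ssum_nonneg[OF E\<phi>] by (intro mult_right_mono) auto
      also have "\<dots> \<le> \<bar>C\<bar> * (C1 * ssum N1 \<phi>)" using c1 \<phi> by (intro mult_left_mono) auto
      finally show ?thesis by simp
    qed
    then show ?case by blast
  qed
  have kb: "\<forall>j. \<exists>C N. \<forall>\<phi>\<in>schwartz. \<forall>x. norm (complex_of_real x ^ j * dn k (A \<phi>) x) \<le> C * ssum N \<phi>" for k
  proof (induction k)
    case 0 then show ?case using jb by simp
  next
    case (Suc k)
    show ?case
    proof
      fix j
      obtain C N where CN: "\<forall>\<phi>\<in>schwartz. \<forall>x. norm (complex_of_real x ^ j * dn k (A \<phi>) x) \<le> C * ssum N \<phi>"
        using Suc by blast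
      obtain C1 N1 where c1: "\<forall>\<phi>\<in>schwartz. ssum N (D \<phi>) \<le> C1 * ssum N1 \<phi>"
        using smap_ssum[OF sD] by blast
      have "norm (complex_of_real x ^ j * dn (Suc k) (A \<phi>) x) \<le> (\<bar>C\<bar> * C1) * ssum N1 \<phi>" if \<phi>: "\<phi> \<in> schwartz" for \<phi> x
      proof -
        have D\<phi>: "D \<phi> \<in> schwartz" using sD \<phi> smapD1 by blast
        have "dn (Suc k) (A \<phi>) = dn k (A (D \<phi>))" by (metis dn_Suc' dA \<phi>)
        then have "norm (complex_of_real x ^ j * dn (Suc k) (A \<phi>) x) \<le> C * ssum N (D \<phi>)" using CN D\<phi> by metis
        also have "\<dots> \<le> \<bar>C\<bar> * ssum N (D \<phi>)" using ssum_nonneg[OF D\<phi>] by (intro mult_right_mono) auto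
        also have "\<dots> \<le> \<bar>C\<bar> * (C1 * ssum N1 \<phi>)" using c1 \<phi> by (intro mult_left_mono) auto
        finally show ?thesis by simp
      qed
      then show "\<exists>C N. \<forall>\<phi>\<in>schwartz. \<forall>x. norm (complex_of_real x ^ j * dn (Suc k) (A \<phi>) x) \<le> C * ssum N \<phi>" by blast
    qed
  qed
  show ?thesis unfolding smap_def
  proof (intro conjI ballI allI)
    show "\<phi> \<in> schwartz \<Longrightarrow> A \<phi> \<in> schwartz" for \<phi>
    proof (rule schwartzI)
      assume "\<phi> \<in> schwartz"
      then show "(dn k (A \<phi>) has_vector_derivative dn (Suc k) (A \<phi>) x) (at x)" for k x using smooth by blast
      show "\<exists>C. \<forall>x. norm (complex_of_real x ^ j * dn k (A \<phi>) x) \<le> C" for j k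
        using kb[of k] \<open>\<phi> \<in> schwartz\<close> by blast
    qed
    fix j k
    obtain C N where CN: "\<forall>\<phi>\<in>schwartz. \<forall>x. norm (complex_of_real x ^ j * dn k (A \<phi>) x) \<le> C * ssum N \<phi>"
      using kb by blast
    then have "\<forall>\<phi>\<in>schwartz. sn j k (A \<phi>) \<le> C * ssum N \<phi>" by (auto intro: sn_least)
    then show "\<exists>C N. \<forall>\<phi>\<in>schwartz. sn j k (A \<phi>) \<le> C * ssum N \<phi>" by blast
  qed
qed


lemma integrable_w: "integrable lborel (\<lambda>x::real. inverse (1 + x^2))"
  using integrable_inverse_1_plus_square unfolding set_integrable_def einterval_eq_UNIV by simp

lemma integral_w: "(LINT x|lborel. inverse (1 + x^2)) = pi"
  using LBINT_inverse_1_plus_square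
  unfolding interval_lebesgue_integral_def set_lebesgue_integral_def einterval_eq_UNIV by simp

lemma schwartz_decay:
  assumes a: "\<phi> \<in> schwartz"
  shows "norm (\<phi> x) \<le> (sn 0 0 \<phi> + sn 2 0 \<phi>) * inverse (1 + x^2)"
proof -
  have "norm (\<phi> x) * (1 + x^2) = norm (\<phi> x) + norm (complex_of_real x ^ 2 * \<phi> x)"
    by (simp add: norm_mult norm_power algebra_simps)
  also have "\<dots> \<le> sn 0 0 \<phi> + sn 2 0 \<phi>"
    using sn_upper[OF a, of x 0 0] sn_upper[OF a, of x 2 0] by (intro add_mono) auto
  finally show ?thesis
    by (simp add: field_simps add_pos_nonneg)
qed

lemma schwartz_borel: "\<phi> \<in> schwartz \<Longrightarrow> \<phi> \<in> borel_measurable lborel"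
  using schwartz_cont[of \<phi> 0] borel_measurable_continuous_onI by simp

lemma schwartz_integrable: "\<phi> \<in> schwartz \<Longrightarrow> integrable lborel \<phi>"
proof -
  assume a: "\<phi> \<in> schwartz"
  show ?thesis
  proof (rule Bochner_Integration.integrable_bound[where f="\<lambda>x::real. (sn 0 0 \<phi> + sn 2 0 \<phi>) * inverse (1 + x^2)" and M=lborel])
    show "integrable lborel (\<lambda>x. (sn 0 0 \<phi> + sn 2 0 \<phi>) * inverse (1 + x^2))"
      using integrable_w by simp
    show "\<phi> \<in> borel_measurable lborel" using schwartz_borel[OF a] .
    show "AE x in lborel. norm (\<phi> x) \<le> norm ((sn 0 0 \<phi> + sn 2 0 \<phi>) * inverse (1 + x^2))"
      using schwartz_decay[OF a] sn_nonneg[OF a] by (auto intro!: AE_I2 order_trans[OF _ abs_ge_self])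
  qed
qed

lemma integrable_bounded_mult:
  assumes a: "\<phi> \<in> schwartz" and m: "g \<in> borel_measurable lborel" and b: "\<And>x. norm (g x) \<le> B"
  shows "integrable lborel (\<lambda>x. g x * \<phi> x :: complex)"
proof (rule Bochner_Integration.integrable_bound[where f="\<lambda>x::real. B * norm (\<phi> x)" and M=lborel])
  show "integrable lborel (\<lambda>x. B * norm (\<phi> x))" using schwartz_integrable[OF a] by auto
  show "(\<lambda>x. g x * \<phi> x) \<in> borel_measurable lborel" using m schwartz_borel[OF a] by measurable
  show "AE x in lborel. norm (g x * \<phi> x) \<le> norm (B * norm (\<phi> x))"
  proof (intro AE_I2)
    fix x
    have "norm (g x * \<phi> x) \<le> B * norm (\<phi> x)" unfolding norm_mult by (intro mult_right_mono b) auto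
    also have "\<dots> \<le> norm (B * norm (\<phi> x))" by simp
    finally show "norm (g x * \<phi> x) \<le> norm (B * norm (\<phi> x))" .
  qed
qed

lemma L1_bound:
  assumes a: "\<phi> \<in> schwartz"
  shows "(LINT x|lborel. norm (\<phi> x)) \<le> pi * (sn 0 0 \<phi> + sn 2 0 \<phi>)"
proof -
  have "(LINT x|lborel. norm (\<phi> x)) \<le> (LINT x|lborel. (sn 0 0 \<phi> + sn 2 0 \<phi>) * inverse (1 + x^2))"
    using schwartz_integrable[OF a] integrable_w schwartz_decay[OF a]
    by (intro integral_mono) auto
  also have "\<dots> = pi * (sn 0 0 \<phi> + sn 2 0 \<phi>)" using integral_w by simp
  finally show ?thesis .
qed

lemma schwartz_zero: "(\<lambda>x. 0) \<in> schwartz"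
proof -
  have z: "dn k (\<lambda>x. 0) = (\<lambda>x. 0)" for k by (induction k) auto
  show ?thesis by (rule schwartzI) (auto simp: z simp del: dn.simps)
qed

lemma schwartz_sum: "finite I \<Longrightarrow> (\<And>i. i \<in> I \<Longrightarrow> \<psi> i \<in> schwartz) \<Longrightarrow> (\<lambda>x. \<Sum>i\<in>I. a i * \<psi> i x) \<in> schwartz"
proof (induction I rule: finite_induct)
  case empty then show ?case using schwartz_zero by simp
next
  case (insert i I)
  then have "(\<lambda>x. 1 * (a i * \<psi> i x) + 1 * (\<Sum>i\<in>I. a i * \<psi> i x)) \<in> schwartz"
    by (intro schwartz_lin schwartz_cmult) auto
  then show ?case using insert by simp
qed

lemma schwartz_dn: "\<phi> \<in> schwartz \<Longrightarrow> dn k \<phi> \<in> schwartz"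
proof (induction k arbitrary: \<phi>)
  case 0 then show ?case by simp
next
  case (Suc k) then show ?case by (metis dn_Suc' schwartz_dn1)
qed

lemma schwartz_xpow: "\<phi> \<in> schwartz \<Longrightarrow> (\<lambda>x. complex_of_real x ^ j * \<phi> x) \<in> schwartz"
proof (induction j)
  case 0 then show ?case by simp
next
  case (Suc j)
  then have "(\<lambda>x. complex_of_real x * (complex_of_real x ^ j * \<phi> x)) \<in> schwartz" by (intro schwartz_xmult)
  then show ?case by (simp add: mult.assoc)
qed

lemma tempered_bound: "tempered u \<Longrightarrow> \<exists>C N. \<forall>\<phi>\<in>schwartz. norm (u \<phi>) \<le> C * ssum N \<phi>"
  unfolding tempered_def ssum_def sn_def by blast

lemma tempered_add: "tempered u \<Longrightarrow> \<phi> \<in> schwartz \<Longrightarrow> \<psi> \<in> schwartz \<Longrightarrow> u (\<lambda>x. \<phi> x + \<psi> x) = u \<phi> + u \<psi>"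
  unfolding tempered_def by blast

lemma tempered_cmult: "tempered u \<Longrightarrow> \<phi> \<in> schwartz \<Longrightarrow> u (\<lambda>x. c * \<phi> x) = c * u \<phi>"
  unfolding tempered_def by blast

lemma tempered_zero: "tempered u \<Longrightarrow> u (\<lambda>x. 0) = 0"
  using tempered_cmult[OF _ schwartz_zero, of u 0] by simp

lemma tempered_sum:
  assumes u: "tempered u"
  shows "finite I \<Longrightarrow> (\<And>i. i \<in> I \<Longrightarrow> \<psi> i \<in> schwartz) \<Longrightarrow> u (\<lambda>x. \<Sum>i\<in>I. a i * \<psi> i x) = (\<Sum>i\<in>I. a i * u (\<psi> i))"
proof (induction I rule: finite_induct)
  case empty then show ?case using tempered_zero[OF u] by simp
next
  case (insert i I)
  have s: "(\<lambda>x. \<Sum>i\<in>I. a i * \<psi> i x) \<in> schwartz" using insert by (intro schwartz_sum) auto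
  have "u (\<lambda>x. \<Sum>i\<in>insert i I. a i * \<psi> i x) = u (\<lambda>x. (a i * \<psi> i x) + (\<Sum>i\<in>I. a i * \<psi> i x))"
    using insert by simp
  also have "\<dots> = u (\<lambda>x. a i * \<psi> i x) + u (\<lambda>x. \<Sum>i\<in>I. a i * \<psi> i x)"
    using insert s by (intro tempered_add[OF u] schwartz_cmult) auto
  also have "\<dots> = a i * u (\<psi> i) + (\<Sum>i\<in>I. a i * u (\<psi> i))"
    using insert by (simp add: tempered_cmult[OF u])
  finally show ?case using insert by simp
qed

definition slin :: "((real \<Rightarrow> complex) \<Rightarrow> (real \<Rightarrow> complex)) \<Rightarrow> bool" where
  "slin A \<longleftrightarrow> (\<forall>\<phi>\<in>schwartz. \<forall>\<psi>\<in>schwartz. A (\<lambda>x. \<phi> x + \<psi> x) = (\<lambda>x. A \<phi> x + A \<psi> x)) \<and>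
              (\<forall>\<phi>\<in>schwartz. \<forall>c. A (\<lambda>x. c * \<phi> x) = (\<lambda>x. c * A \<phi> x))"

lemma tempered_comp:
  assumes u: "tempered u" and A: "smap A" "slin A"
  shows "tempered (\<lambda>\<phi>. u (A \<phi>))"
  unfolding tempered_def
proof (intro conjI ballI allI)
  show "u (A (\<lambda>x. \<phi> x + \<psi> x)) = u (A \<phi>) + u (A \<psi>)" if "\<phi> \<in> schwartz" "\<psi> \<in> schwartz" for \<phi> \<psi>
    using that A u smapD1 unfolding slin_def by (simp add: tempered_add)
  show "u (A (\<lambda>x. c * \<phi> x)) = c * u (A \<phi>)" if "\<phi> \<in> schwartz" for \<phi> c
    using that A u smapD1 unfolding slin_def by (simp add: tempered_cmult)
  obtain C N where CN: "\<forall>\<phi>\<in>schwartz. norm (u \<phi>) \<le> C * ssum N \<phi>" using tempered_bound[OF u] by blast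
  have "\<phi> \<in> schwartz \<Longrightarrow> norm (u (A \<phi>)) \<le> C * ssum N (A \<phi>)" for \<phi> using CN A smapD1 by blast
  from bound_compose[OF this A(1)]
  obtain C' N' where "\<forall>\<phi>\<in>schwartz. norm (u (A \<phi>)) \<le> C' * ssum N' \<phi>" by blast
  then show "\<exists>C N. \<forall>\<phi>\<in>schwartz. norm (u (A \<phi>)) \<le> C * (\<Sum>j\<le>N. \<Sum>k\<le>N. SUP x. norm (complex_of_real x ^ j * dn k \<phi> x))"
    unfolding ssum_def sn_def by blast
qed

definition stransp :: "((real \<Rightarrow> complex) \<Rightarrow> (real \<Rightarrow> complex)) \<Rightarrow> bool" where
  "stransp A \<longleftrightarrow> (\<forall>f\<in>schwartz. \<exists>g\<in>schwartz. \<forall>\<phi>\<in>schwartz.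
      (LINT x|lborel. f x * A \<phi> x) = (LINT x|lborel. g x * \<phi> x))"

definition OpL :: "((real \<Rightarrow> complex) \<Rightarrow> (real \<Rightarrow> complex)) \<Rightarrow> ((real \<Rightarrow> complex) \<Rightarrow> complex) \<Rightarrow> (real \<Rightarrow> complex) \<Rightarrow> complex" where
  "OpL L u = (\<lambda>\<phi>. u (L \<phi>))"

lemma equiv_ops:
  assumes "\<And>u \<phi>. tempered u \<Longrightarrow> \<phi> \<in> schwartz \<Longrightarrow> P u \<phi> = Q u \<phi>"
  shows "(kernel_trivial P \<longleftrightarrow> kernel_trivial Q) \<and> (globally_regular P \<longleftrightarrow> globally_regular Q)"
proof -
  have "in_S (P u) \<longleftrightarrow> in_S (Q u)" if "tempered u" for u
    using assms[OF that] unfolding in_S_def by auto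
  then show ?thesis unfolding kernel_trivial_def globally_regular_def using assms by auto
qed

lemma framework:
  assumes sA: "smap A" "slin A" "stransp A"
    and sB: "smap B" "slin B" "stransp B"
    and inv: "\<And>\<phi>. \<phi> \<in> schwartz \<Longrightarrow> A (B \<phi>) = \<phi>" "\<And>\<phi>. \<phi> \<in> schwartz \<Longrightarrow> B (A \<phi>) = \<phi>"
    and Lp: "\<And>\<phi>. \<phi> \<in> schwartz \<Longrightarrow> Lp \<phi> \<in> schwartz"
    and Lq: "\<And>\<phi>. \<phi> \<in> schwartz \<Longrightarrow> Lq \<phi> \<in> schwartz"
    and inter: "\<And>\<phi>. \<phi> \<in> schwartz \<Longrightarrow> A (Lq \<phi>) = Lp (A \<phi>)"
  shows "(kernel_trivial (OpL Lp) \<longrightarrow> kernel_trivial (OpL Lq)) \<and>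
         (globally_regular (OpL Lp) \<longrightarrow> globally_regular (OpL Lq))"
proof -
  have inter': "B (Lp \<psi>) = Lq (B \<psi>)" if \<psi>: "\<psi> \<in> schwartz" for \<psi>
  proof -
    have B\<psi>: "B \<psi> \<in> schwartz" using sB \<psi> smapD1 by blast
    have "A (Lq (B \<psi>)) = Lp \<psi>" using inter[OF B\<psi>] inv(1)[OF \<psi>] by simp
    then have "B (A (Lq (B \<psi>))) = B (Lp \<psi>)" by simp
    then show ?thesis using inv(2)[OF Lq[OF B\<psi>]] by simp
  qed
  have K: "kernel_trivial (OpL Lq)" if K0: "kernel_trivial (OpL Lp)"
    unfolding kernel_trivial_def OpL_def
  proof (intro allI impI ballI)
    fix w \<phi> assume w: "tempered w" and z: "\<forall>\<phi>\<in>schwartz. w (Lq \<phi>) = 0" and \<phi>: "\<phi> \<in> schwartz"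
    have u: "tempered (\<lambda>\<phi>. w (B \<phi>))" using tempered_comp[OF w sB(1,2)] .
    have "\<forall>\<psi>\<in>schwartz. w (B (Lp \<psi>)) = 0"
      using z inter' sB smapD1 by auto
    then have "\<forall>\<psi>\<in>schwartz. w (B \<psi>) = 0" using K0 u unfolding kernel_trivial_def OpL_def by blast
    then have "w (B (A \<phi>)) = 0" using sA \<phi> smapD1 by blast
    then show "w \<phi> = 0" using inv(2)[OF \<phi>] by simp
  qed
  have G: "globally_regular (OpL Lq)" if G0: "globally_regular (OpL Lp)"
    unfolding globally_regular_def
  proof (intro allI impI)
    fix w assume w: "tempered w" and iS: "in_S (OpL Lq w)"
    have u: "tempered (\<lambda>\<phi>. w (B \<phi>))" using tempered_comp[OF w sB(1,2)] .
    from iS obtain f where f: "f \<in> schwartz" "\<forall>\<phi>\<in>schwartz. w (Lq \<phi>) = (LINT x|lborel. f x * \<phi> x)"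
      unfolding in_S_def OpL_def by blast
    from sB(3) f(1) obtain g where g: "g \<in> schwartz" "\<forall>\<phi>\<in>schwartz. (LINT x|lborel. f x * B \<phi> x) = (LINT x|lborel. g x * \<phi> x)"
      unfolding stransp_def by blast
    have "in_S (OpL Lp (\<lambda>\<phi>. w (B \<phi>)))" unfolding in_S_def OpL_def
    proof (intro bexI[OF _ g(1)] ballI)
      fix \<psi> assume \<psi>: "\<psi> \<in> schwartz"
      have B\<psi>: "B \<psi> \<in> schwartz" using sB \<psi> smapD1 by blast
      have "w (B (Lp \<psi>)) = w (Lq (B \<psi>))" using inter'[OF \<psi>] by simp
      also have "\<dots> = (LINT x|lborel. f x * B \<psi> x)" using f B\<psi> by blast
      also have "\<dots> = (LINT x|lborel. g x * \<psi> x)" using g \<psi> by blast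
      finally show "w (B (Lp \<psi>)) = (LINT x|lborel. g x * \<psi> x)" .
    qed
    then have "in_S (\<lambda>\<phi>. w (B \<phi>))" using G0 u unfolding globally_regular_def by blast
    then obtain h where h: "h \<in> schwartz" "\<forall>\<psi>\<in>schwartz. w (B \<psi>) = (LINT x|lborel. h x * \<psi> x)"
      unfolding in_S_def by blast
    from sA(3) h(1) obtain k where k: "k \<in> schwartz" "\<forall>\<phi>\<in>schwartz. (LINT x|lborel. h x * A \<phi> x) = (LINT x|lborel. k x * \<phi> x)"
      unfolding stransp_def by blast
    show "in_S w" unfolding in_S_def
    proof (intro bexI[OF _ k(1)] ballI)
      fix \<phi> assume \<phi>: "\<phi> \<in> schwartz"
      have A\<phi>: "A \<phi> \<in> schwartz" using sA \<phi> smapD1 by blast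
      have "w \<phi> = w (B (A \<phi>))" using inv(2)[OF \<phi>] by simp
      also have "\<dots> = (LINT x|lborel. h x * A \<phi> x)" using h A\<phi> by blast
      also have "\<dots> = (LINT x|lborel. k x * \<phi> x)" using k \<phi> by blast
      finally show "w \<phi> = (LINT x|lborel. k x * \<phi> x)" .
    qed
  qed
  show ?thesis using K G by blast
qed

lemma framework_iff:
  assumes sA: "smap A" "slin A" "stransp A"
    and sB: "smap B" "slin B" "stransp B"
    and inv: "\<And>\<phi>. \<phi> \<in> schwartz \<Longrightarrow> A (B \<phi>) = \<phi>" "\<And>\<phi>. \<phi> \<in> schwartz \<Longrightarrow> B (A \<phi>) = \<phi>"
    and Lp: "\<And>\<phi>. \<phi> \<in> schwartz \<Longrightarrow> Lp \<phi> \<in> schwartz"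
    and Lq: "\<And>\<phi>. \<phi> \<in> schwartz \<Longrightarrow> Lq \<phi> \<in> schwartz"
    and inter: "\<And>\<phi>. \<phi> \<in> schwartz \<Longrightarrow> A (Lq \<phi>) = Lp (A \<phi>)"
  shows "(kernel_trivial (OpL Lp) \<longleftrightarrow> kernel_trivial (OpL Lq)) \<and>
         (globally_regular (OpL Lp) \<longleftrightarrow> globally_regular (OpL Lq))"
proof -
  have inter': "B (Lp \<psi>) = Lq (B \<psi>)" if \<psi>: "\<psi> \<in> schwartz" for \<psi>
  proof -
    have B\<psi>: "B \<psi> \<in> schwartz" using sB \<psi> smapD1 by blast
    have "A (Lq (B \<psi>)) = Lp \<psi>" using inter[OF B\<psi>] inv(1)[OF \<psi>] by simp
    then have "B (A (Lq (B \<psi>))) = B (Lp \<psi>)" by simp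
    then show ?thesis using inv(2)[OF Lq[OF B\<psi>]] by simp
  qed
  show ?thesis
    using framework[where A=A and B=B and Lp=Lp and Lq=Lq, OF sA sB inv Lp Lq inter]
      framework[where A=B and B=A and Lp=Lq and Lq=Lp, OF sB sA inv(2,1) Lq Lp inter'] by blast
qed


declare dn.simps(2)[simp del]

definition Lc :: "(nat \<Rightarrow> nat \<Rightarrow> complex) \<Rightarrow> (real \<Rightarrow> complex) \<Rightarrow> real \<Rightarrow> complex" where
  "Lc c \<phi> = (\<lambda>x. c 0 0 * \<phi> x + c 0 1 * (complex_of_real x * \<phi> x) + c 0 2 * (complex_of_real x ^ 2 * \<phi> x)
      + \<i> * c 1 0 * dn 1 \<phi> x + \<i> * c 1 1 * (\<phi> x + complex_of_real x * dn 1 \<phi> x) - c 2 0 * dn 2 \<phi> x)"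

lemma Mop_pow: "(Mop ^^ j) v = (\<lambda>\<phi>. v (\<lambda>x. complex_of_real x ^ j * \<phi> x))"
proof (induction j arbitrary: v)
  case 0 then show ?case by simp
next
  case (Suc j) then show ?case by (simp add: Mop_def mult.assoc mult.left_commute)
qed

lemma Dop_pow: "(Dop ^^ k) u = (\<lambda>\<phi>. \<i> ^ k * u (dn k \<phi>))"
proof (induction k)
  case 0 then show ?case by simp
next
  case (Suc k)
  have "dn k (\<lambda>x. vector_derivative \<phi> (at x)) = dn (Suc k) \<phi>" for \<phi>
  proof -
    have "(\<lambda>x. vector_derivative \<phi> (at x)) = dn 1 \<phi>" by (simp add: dn.simps)
    then show ?thesis by (simp only: dn_Suc'[symmetric])
  qed
  then show ?case using Suc by (simp add: Dop_def mult.assoc)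
qed

lemma Dop_pow_Mop_pow: "(Dop ^^ k) ((Mop ^^ j) u) = (\<lambda>\<phi>. \<i> ^ k * u (\<lambda>x. complex_of_real x ^ j * dn k \<phi> x))"
  by (simp add: Dop_pow Mop_pow)

lemma sum2: "(\<Sum>k\<le>2::nat. \<Sum>j\<le>2 - k. f k j) = f 0 0 + f 0 1 + f 0 2 + f 1 0 + f 1 1 + f 2 0"
  by (simp add: numeral_2_eq_2 atMost_Suc add_ac)

lemma tempered_lin:
  assumes "tempered u" "f \<in> schwartz" "g \<in> schwartz"
  shows "u (\<lambda>x. a * f x + g x) = a * u f + u g"
  using tempered_add[OF assms(1) schwartz_cmult[OF assms(2)] assms(3)] tempered_cmult[OF assms(1,2)] by simp

lemma dn1_x: "\<phi> \<in> schwartz \<Longrightarrow> dn 1 (\<lambda>x. complex_of_real x * \<phi> x) = (\<lambda>x. \<phi> x + complex_of_real x * dn 1 \<phi> x)"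
  using dn_xmult[of \<phi> 1] by (simp add: algebra_simps)

lemma lin6:
  assumes u: "tempered u" and f: "f1 \<in> schwartz" "f2 \<in> schwartz" "f3 \<in> schwartz" "f4 \<in> schwartz" "f5 \<in> schwartz" "f6 \<in> schwartz"
  shows "u (\<lambda>x. a1 * f1 x + a2 * f2 x + a3 * f3 x + a4 * f4 x + a5 * f5 x + a6 * f6 x)
     = a1 * u f1 + a2 * u f2 + a3 * u f3 + a4 * u f4 + a5 * u f5 + a6 * u f6"
proof -
  have p2: "(\<lambda>x. a1 * f1 x + a2 * f2 x) \<in> schwartz" using f by (intro schwartz_lin)
  have p3: "(\<lambda>x. a1 * f1 x + a2 * f2 x + a3 * f3 x) \<in> schwartz" using schwartz_add[OF p2 schwartz_cmult[OF f(3)]] .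
  have p4: "(\<lambda>x. a1 * f1 x + a2 * f2 x + a3 * f3 x + a4 * f4 x) \<in> schwartz" using schwartz_add[OF p3 schwartz_cmult[OF f(4)]] .
  have p5: "(\<lambda>x. a1 * f1 x + a2 * f2 x + a3 * f3 x + a4 * f4 x + a5 * f5 x) \<in> schwartz" using schwartz_add[OF p4 schwartz_cmult[OF f(5)]] .
  have "u (\<lambda>x. a1 * f1 x + a2 * f2 x + a3 * f3 x + a4 * f4 x + a5 * f5 x + a6 * f6 x)
      = u (\<lambda>x. a1 * f1 x + a2 * f2 x + a3 * f3 x + a4 * f4 x + a5 * f5 x) + a6 * u f6"
    using tempered_add[OF u p5 schwartz_cmult[OF f(6)]] tempered_cmult[OF u f(6)] by simp
  also have "u (\<lambda>x. a1 * f1 x + a2 * f2 x + a3 * f3 x + a4 * f4 x + a5 * f5 x)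
      = u (\<lambda>x. a1 * f1 x + a2 * f2 x + a3 * f3 x + a4 * f4 x) + a5 * u f5"
    using tempered_add[OF u p4 schwartz_cmult[OF f(5)]] tempered_cmult[OF u f(5)] by simp
  also have "u (\<lambda>x. a1 * f1 x + a2 * f2 x + a3 * f3 x + a4 * f4 x)
      = u (\<lambda>x. a1 * f1 x + a2 * f2 x + a3 * f3 x) + a4 * u f4"
    using tempered_add[OF u p3 schwartz_cmult[OF f(4)]] tempered_cmult[OF u f(4)] by simp
  also have "u (\<lambda>x. a1 * f1 x + a2 * f2 x + a3 * f3 x)
      = u (\<lambda>x. a1 * f1 x + a2 * f2 x) + a3 * u f3"
    using tempered_add[OF u p2 schwartz_cmult[OF f(3)]] tempered_cmult[OF u f(3)] by simp
  also have "u (\<lambda>x. a1 * f1 x + a2 * f2 x) = a1 * u f1 + a2 * u f2"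
    using tempered_add[OF u schwartz_cmult[OF f(1)] schwartz_cmult[OF f(2)]] tempered_cmult[OF u f(1)] tempered_cmult[OF u f(2)] by simp
  finally show ?thesis .
qed

lemma op_of_eq:
  assumes u: "tempered u" and \<phi>: "\<phi> \<in> schwartz"
  shows "op_of c u \<phi> = u (Lc c \<phi>)"
proof -
  have s1: "(\<lambda>x. complex_of_real x * \<phi> x) \<in> schwartz" using \<phi> by (rule schwartz_xmult)
  have s2: "(\<lambda>x. complex_of_real x ^ 2 * \<phi> x) \<in> schwartz" using \<phi> by (rule schwartz_xpow)
  have s3: "dn 1 \<phi> \<in> schwartz" "dn 2 \<phi> \<in> schwartz" using \<phi> by (auto intro: schwartz_dn)
  have s4: "(\<lambda>x. complex_of_real x * dn 1 \<phi> x) \<in> schwartz" using s3 by (intro schwartz_xmult)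
  have s5: "(\<lambda>x. \<phi> x + complex_of_real x * dn 1 \<phi> x) \<in> schwartz" using \<phi> s4 by (intro schwartz_add)
  have "op_of c u \<phi> = c 0 0 * u \<phi> + c 0 1 * u (\<lambda>x. complex_of_real x * \<phi> x)
      + c 0 2 * u (\<lambda>x. complex_of_real x ^ 2 * \<phi> x) + (\<i> * c 1 0) * u (dn 1 \<phi>)
      + (\<i> * c 1 1) * u (\<lambda>x. \<phi> x + complex_of_real x * dn 1 \<phi> x) + (- c 2 0) * u (dn 2 \<phi>)"
    unfolding op_of_def sum2 Mop_pow Dop_pow using dn1_x[OF \<phi>] by (simp add: power2_eq_square)
  also have "\<dots> = u (\<lambda>x. c 0 0 * \<phi> x + c 0 1 * (complex_of_real x * \<phi> x)
      + c 0 2 * (complex_of_real x ^ 2 * \<phi> x) + (\<i> * c 1 0) * dn 1 \<phi> x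
      + (\<i> * c 1 1) * (\<phi> x + complex_of_real x * dn 1 \<phi> x) + (- c 2 0) * dn 2 \<phi> x)"
    by (rule lin6[OF u \<phi> s1 s2 s3(1) s5 s3(2), symmetric])
  also have "\<dots> = u (Lc c \<phi>)" unfolding Lc_def by (simp add: algebra_simps)
  finally show ?thesis .
qed


definition trc :: "(nat \<Rightarrow> nat \<Rightarrow> complex) \<Rightarrow> nat \<Rightarrow> nat \<Rightarrow> complex" where
  "trc c = (\<lambda>k j. if k = 0 \<and> j = 0 then c 0 0 + \<i> * c 1 1 else if k = 1 \<and> j = 0 then - c 1 0
      else if k = 1 \<and> j = 1 then - c 1 1 else c k j)"

lemma op_transpose_eq:
  assumes u: "tempered u" and \<phi>: "\<phi> \<in> schwartz"
  shows "op_transpose c u \<phi> = u (Lc (trc c) \<phi>)"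
proof -
  have s1: "(\<lambda>x. complex_of_real x * \<phi> x) \<in> schwartz" using \<phi> by (rule schwartz_xmult)
  have s2: "(\<lambda>x. complex_of_real x ^ 2 * \<phi> x) \<in> schwartz" using \<phi> by (rule schwartz_xpow)
  have s3: "dn 1 \<phi> \<in> schwartz" "dn 2 \<phi> \<in> schwartz" using \<phi> by (auto intro: schwartz_dn)
  have s4: "(\<lambda>x. complex_of_real x * dn 1 \<phi> x) \<in> schwartz" using s3 by (intro schwartz_xmult)
  have "op_transpose c u \<phi> = c 0 0 * u \<phi> + c 0 1 * u (\<lambda>x. complex_of_real x * \<phi> x)
      + c 0 2 * u (\<lambda>x. complex_of_real x ^ 2 * \<phi> x) + (- \<i> * c 1 0) * u (dn 1 \<phi>)
      + (- \<i> * c 1 1) * u (\<lambda>x. complex_of_real x * dn 1 \<phi> x) + (- c 2 0) * u (dn 2 \<phi>)"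
    unfolding op_transpose_def sum2 Dop_pow_Mop_pow by (simp add: power2_eq_square)
  also have "\<dots> = u (\<lambda>x. c 0 0 * \<phi> x + c 0 1 * (complex_of_real x * \<phi> x)
      + c 0 2 * (complex_of_real x ^ 2 * \<phi> x) + (- \<i> * c 1 0) * dn 1 \<phi> x
      + (- \<i> * c 1 1) * (complex_of_real x * dn 1 \<phi> x) + (- c 2 0) * dn 2 \<phi> x)"
    by (rule lin6[OF u \<phi> s1 s2 s3(1) s4 s3(2), symmetric])
  also have "\<dots> = u (Lc (trc c) \<phi>)" unfolding Lc_def trc_def by (simp add: algebra_simps)
  finally show ?thesis .
qed

lemma Lc_cong:
  assumes w: "\<And>x \<xi>. weyl_symbol c x \<xi> = weyl_symbol d x \<xi>"
  shows "Lc c = Lc d"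
proof -
  have h1: "c 0 0 + \<i>/2 * c 1 1 = d 0 0 + \<i>/2 * d 1 1" using w[of 0 0] by (simp add: weyl_symbol_def)
  have h2: "c 2 0 + c 1 0 + c 0 0 + \<i>/2 * c 1 1 = d 2 0 + d 1 0 + d 0 0 + \<i>/2 * d 1 1"
    using w[of 0 1] by (simp add: weyl_symbol_def)
  have h3: "c 2 0 - c 1 0 + c 0 0 + \<i>/2 * c 1 1 = d 2 0 - d 1 0 + d 0 0 + \<i>/2 * d 1 1"
    using w[of 0 "-1"] by (simp add: weyl_symbol_def)
  have h4: "c 0 2 + c 0 1 + c 0 0 + \<i>/2 * c 1 1 = d 0 2 + d 0 1 + d 0 0 + \<i>/2 * d 1 1"
    using w[of 1 0] by (simp add: weyl_symbol_def)
  have h5: "c 0 2 - c 0 1 + c 0 0 + \<i>/2 * c 1 1 = d 0 2 - d 0 1 + d 0 0 + \<i>/2 * d 1 1"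
    using w[of "-1" 0] by (simp add: weyl_symbol_def)
  have h6: "c 2 0 + c 1 1 + c 0 2 + c 1 0 + c 0 1 + c 0 0 + \<i>/2 * c 1 1 = d 2 0 + d 1 1 + d 0 2 + d 1 0 + d 0 1 + d 0 0 + \<i>/2 * d 1 1"
    using w[of 1 1] by (simp add: weyl_symbol_def)
  have e20: "c 2 0 = d 2 0"
  proof -
    have "c 2 0 - d 2 0 = ((c 2 0 + c 1 0 + c 0 0 + \<i>/2 * c 1 1 - (d 2 0 + d 1 0 + d 0 0 + \<i>/2 * d 1 1))
       + (c 2 0 - c 1 0 + c 0 0 + \<i>/2 * c 1 1 - (d 2 0 - d 1 0 + d 0 0 + \<i>/2 * d 1 1))) / 2
       - (c 0 0 + \<i>/2 * c 1 1 - (d 0 0 + \<i>/2 * d 1 1))" by (simp add: field_simps)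
    also have "\<dots> = 0" by (simp only: h1 h2 h3 diff_self) simp
    finally show ?thesis by simp
  qed
  have e10: "c 1 0 = d 1 0"
  proof -
    have "c 1 0 - d 1 0 = ((c 2 0 + c 1 0 + c 0 0 + \<i>/2 * c 1 1 - (d 2 0 + d 1 0 + d 0 0 + \<i>/2 * d 1 1))
       - (c 2 0 - c 1 0 + c 0 0 + \<i>/2 * c 1 1 - (d 2 0 - d 1 0 + d 0 0 + \<i>/2 * d 1 1))) / 2" by (simp add: field_simps)
    also have "\<dots> = 0" by (simp only: h1 h2 h3 diff_self) simp
    finally show ?thesis by simp
  qed
  have e02: "c 0 2 = d 0 2"
  proof -
    have "c 0 2 - d 0 2 = ((c 0 2 + c 0 1 + c 0 0 + \<i>/2 * c 1 1 - (d 0 2 + d 0 1 + d 0 0 + \<i>/2 * d 1 1))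
       + (c 0 2 - c 0 1 + c 0 0 + \<i>/2 * c 1 1 - (d 0 2 - d 0 1 + d 0 0 + \<i>/2 * d 1 1))) / 2
       - (c 0 0 + \<i>/2 * c 1 1 - (d 0 0 + \<i>/2 * d 1 1))" by (simp add: field_simps)
    also have "\<dots> = 0" by (simp only: h1 h4 h5 diff_self) simp
    finally show ?thesis by simp
  qed
  have e01: "c 0 1 = d 0 1"
  proof -
    have "c 0 1 - d 0 1 = ((c 0 2 + c 0 1 + c 0 0 + \<i>/2 * c 1 1 - (d 0 2 + d 0 1 + d 0 0 + \<i>/2 * d 1 1))
       - (c 0 2 - c 0 1 + c 0 0 + \<i>/2 * c 1 1 - (d 0 2 - d 0 1 + d 0 0 + \<i>/2 * d 1 1))) / 2" by (simp add: field_simps)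
    also have "\<dots> = 0" by (simp only: h4 h5 diff_self) simp
    finally show ?thesis by simp
  qed
  have e11: "c 1 1 = d 1 1"
  proof -
    have "c 1 1 - d 1 1 = (c 2 0 + c 1 1 + c 0 2 + c 1 0 + c 0 1 + c 0 0 + \<i>/2 * c 1 1 - (d 2 0 + d 1 1 + d 0 2 + d 1 0 + d 0 1 + d 0 0 + \<i>/2 * d 1 1))
       - (c 2 0 + c 1 0 + c 0 0 + \<i>/2 * c 1 1 - (d 2 0 + d 1 0 + d 0 0 + \<i>/2 * d 1 1))
       - (c 0 2 + c 0 1 + c 0 0 + \<i>/2 * c 1 1 - (d 0 2 + d 0 1 + d 0 0 + \<i>/2 * d 1 1))
       + (c 0 0 + \<i>/2 * c 1 1 - (d 0 0 + \<i>/2 * d 1 1))"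
      by (simp add: field_simps)
    also have "\<dots> = 0" by (simp only: h1 h2 h4 h6 diff_self) simp
    finally show ?thesis by simp
  qed
  have e00: "c 0 0 = d 0 0" using h1 e11 by simp
  show ?thesis unfolding Lc_def by (simp only: e20 e10 e02 e01 e11 e00)
qed

lemma weyl_trc: "weyl_symbol (trc c) x \<xi> = weyl_symbol c x (- \<xi>)"
  unfolding weyl_symbol_def trc_def by (simp add: algebra_simps)

definition cmp :: "(nat \<Rightarrow> nat \<Rightarrow> complex) \<Rightarrow> real \<Rightarrow> real \<Rightarrow> real \<Rightarrow> real \<Rightarrow> nat \<Rightarrow> nat \<Rightarrow> complex" where
  "cmp p a b c d = (let
      n20 = p 2 0 * d^2 + p 1 1 * (b * d) + p 0 2 * b^2;
      n11 = p 2 0 * (2 * c * d) + p 1 1 * (a * d + b * c) + p 0 2 * (2 * a * b);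
      n02 = p 2 0 * c^2 + p 1 1 * (a * c) + p 0 2 * a^2;
      n10 = p 1 0 * d + p 0 1 * b;
      n01 = p 1 0 * c + p 0 1 * a;
      n00 = p 0 0 + \<i>/2 * p 1 1 - \<i>/2 * n11
    in (\<lambda>k j. if k = 2 \<and> j = 0 then n20 else if k = 1 \<and> j = 1 then n11 else if k = 0 \<and> j = 2 then n02
        else if k = 1 \<and> j = 0 then n10 else if k = 0 \<and> j = 1 then n01 else n00))"

lemma weyl_cmp: "weyl_symbol (cmp p a b c d) x \<xi> = weyl_symbol p (a * x + b * \<xi>) (c * x + d * \<xi>)"
  unfolding weyl_symbol_def cmp_def Let_def
  apply (simp add: power2_eq_square)
  apply algebra
  done


definition EqL :: "((real \<Rightarrow> complex) \<Rightarrow> (real \<Rightarrow> complex)) \<Rightarrow> ((real \<Rightarrow> complex) \<Rightarrow> (real \<Rightarrow> complex)) \<Rightarrow> bool" where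
  "EqL L L' \<longleftrightarrow> (kernel_trivial (OpL L) \<longleftrightarrow> kernel_trivial (OpL L')) \<and>
                (globally_regular (OpL L) \<longleftrightarrow> globally_regular (OpL L'))"

definition goodM :: "real \<Rightarrow> real \<Rightarrow> real \<Rightarrow> real \<Rightarrow> bool" where
  "goodM a b c d \<longleftrightarrow> (\<forall>p q. (\<forall>x \<xi>. weyl_symbol q x \<xi> = weyl_symbol p (a * x + b * \<xi>) (c * x + d * \<xi>))
      \<longrightarrow> EqL (Lc p) (Lc q))"

lemma goodM_comp:
  assumes "goodM a b c d" "goodM a' b' c' d'"
  shows "goodM (a * a' + b * c') (a * b' + b * d') (c * a' + d * c') (c * b' + d * d')"
  unfolding goodM_def
proof (intro allI impI)
  fix p q assume h: "\<forall>x \<xi>. weyl_symbol q x \<xi> = weyl_symbol p ((a * a' + b * c') * x + (a * b' + b * d') * \<xi>)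
        ((c * a' + d * c') * x + (c * b' + d * d') * \<xi>)"
  define p1 where "p1 = cmp p a b c d"
  have 1: "EqL (Lc p) (Lc p1)" using assms(1) unfolding goodM_def p1_def by (simp add: weyl_cmp)
  have "weyl_symbol q x \<xi> = weyl_symbol p1 (a' * x + b' * \<xi>) (c' * x + d' * \<xi>)" for x \<xi>
    unfolding p1_def weyl_cmp h[rule_format] by (simp add: algebra_simps)
  then have 2: "EqL (Lc p1) (Lc q)" using assms(2) unfolding goodM_def by blast
  show "EqL (Lc p) (Lc q)" using 1 2 unfolding EqL_def by blast
qed

lemma goodM_cong: "goodM a b c d \<Longrightarrow> a = a' \<Longrightarrow> b = b' \<Longrightarrow> c = c' \<Longrightarrow> d = d' \<Longrightarrow> goodM a' b' c' d'"
  by simp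

lemma goodM_all:
  assumes gD: "\<And>c. c \<noteq> 0 \<Longrightarrow> goodM (1 / c) 0 0 c"
    and gS: "\<And>s. goodM 1 0 s 1"
    and gJ: "goodM 0 (-1) 1 0"
    and det: "m11 * m22 - m12 * m21 = 1"
  shows "goodM m11 m12 m21 m22"
proof -
  have lower: "goodM a 0 c d" if "a * d = 1" for a c d
  proof -
    have d0: "d \<noteq> 0" using that by auto
    have "goodM (1 / d * 1 + 0 * (c / d)) (1 / d * 0 + 0 * 1) (0 * 1 + d * (c / d)) (0 * 0 + d * 1)"
      by (rule goodM_comp[OF gD[OF d0] gS])
    then show ?thesis by (rule goodM_cong) (use that d0 in \<open>auto simp: field_simps\<close>)
  qed
  show ?thesis
  proof (cases "m12 = 0")
    case True then show ?thesis using lower det by simp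
  next
    case False
    define t where "t = - m11 / m12"
    have L: "goodM m12 0 m22 (-(m21 + m22 * t))"
      by (rule lower) (use False det in \<open>simp add: t_def field_simps\<close>)
    have "goodM (m12 * 0 + 0 * 1) (m12 * (-1) + 0 * 0) (m22 * 0 + (-(m21 + m22 * t)) * 1) (m22 * (-1) + (-(m21 + m22 * t)) * 0)"
      by (rule goodM_comp[OF L gJ])
    then have LJ: "goodM 0 (- m12) (-(m21 + m22 * t)) (- m22)" by simp
    have Dm: "goodM (-1) 0 0 (-1)" using gD[of "-1"] by simp
    have "goodM (0 * (-1) + (- m12) * 0) (0 * 0 + (- m12) * (-1)) ((-(m21 + m22 * t)) * (-1) + (- m22) * 0) ((-(m21 + m22 * t)) * 0 + (- m22) * (-1))"
      by (rule goodM_comp[OF LJ Dm])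
    then have LJD: "goodM 0 m12 (m21 + m22 * t) m22" by (rule goodM_cong) auto
    have "goodM (0 * 1 + m12 * (- t)) (0 * 0 + m12 * 1) ((m21 + m22 * t) * 1 + m22 * (- t)) ((m21 + m22 * t) * 0 + m22 * 1)"
      by (rule goodM_comp[OF LJD gS])
    then show ?thesis by (rule goodM_cong) (use False in \<open>auto simp: t_def field_simps\<close>)
  qed
qed


lemma smap_scale: "smap A \<Longrightarrow> smap (\<lambda>\<phi> x. a * A \<phi> x)"
  using smap_lin[of A A a 0] by simp

lemma Lc_S: "\<phi> \<in> schwartz \<Longrightarrow> Lc c \<phi> \<in> schwartz"
proof -
  assume \<phi>: "\<phi> \<in> schwartz"
  have s1: "(\<lambda>x. complex_of_real x * \<phi> x) \<in> schwartz" using \<phi> by (rule schwartz_xmult)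
  have s2: "(\<lambda>x. complex_of_real x ^ 2 * \<phi> x) \<in> schwartz" using \<phi> by (rule schwartz_xpow)
  have s3: "dn 1 \<phi> \<in> schwartz" "dn 2 \<phi> \<in> schwartz" using \<phi> by (auto intro: schwartz_dn)
  have s4: "(\<lambda>x. complex_of_real x * dn 1 \<phi> x) \<in> schwartz" using s3 by (intro schwartz_xmult)
  have s5: "(\<lambda>x. \<phi> x + complex_of_real x * dn 1 \<phi> x) \<in> schwartz" using \<phi> s4 by (intro schwartz_add)
  have "(\<lambda>x. c 0 0 * \<phi> x + c 0 1 * (complex_of_real x * \<phi> x) + c 0 2 * (complex_of_real x ^ 2 * \<phi> x)
      + (\<i> * c 1 0) * dn 1 \<phi> x + (\<i> * c 1 1) * (\<phi> x + complex_of_real x * dn 1 \<phi> x) + (- c 2 0) * dn 2 \<phi> x) \<in> schwartz"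
    using \<phi> s1 s2 s3 s4 s5 by (intro schwartz_add schwartz_cmult)
  moreover have "Lc c \<phi> = (\<lambda>x. c 0 0 * \<phi> x + c 0 1 * (complex_of_real x * \<phi> x) + c 0 2 * (complex_of_real x ^ 2 * \<phi> x)
      + (\<i> * c 1 0) * dn 1 \<phi> x + (\<i> * c 1 1) * (\<phi> x + complex_of_real x * dn 1 \<phi> x) + (- c 2 0) * dn 2 \<phi> x)"
    unfolding Lc_def by (simp add: algebra_simps)
  ultimately show ?thesis by simp
qed

lemma slin_add: "slin A \<Longrightarrow> \<phi> \<in> schwartz \<Longrightarrow> \<psi> \<in> schwartz \<Longrightarrow> A (\<lambda>x. \<phi> x + \<psi> x) = (\<lambda>x. A \<phi> x + A \<psi> x)"
  unfolding slin_def by blast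

lemma slin_cmult: "slin A \<Longrightarrow> \<phi> \<in> schwartz \<Longrightarrow> A (\<lambda>x. c * \<phi> x) = (\<lambda>x. c * A \<phi> x)"
  unfolding slin_def by blast

lemma slin6:
  assumes A: "slin A" and f: "f1 \<in> schwartz" "f2 \<in> schwartz" "f3 \<in> schwartz" "f4 \<in> schwartz" "f5 \<in> schwartz" "f6 \<in> schwartz"
  shows "A (\<lambda>x. a1 * f1 x + a2 * f2 x + a3 * f3 x + a4 * f4 x + a5 * f5 x + a6 * f6 x)
     = (\<lambda>x. a1 * A f1 x + a2 * A f2 x + a3 * A f3 x + a4 * A f4 x + a5 * A f5 x + a6 * A f6 x)"
proof -
  have p2: "(\<lambda>x. a1 * f1 x + a2 * f2 x) \<in> schwartz" using f by (intro schwartz_lin)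
  have p3: "(\<lambda>x. a1 * f1 x + a2 * f2 x + a3 * f3 x) \<in> schwartz" using schwartz_add[OF p2 schwartz_cmult[OF f(3)]] .
  have p4: "(\<lambda>x. a1 * f1 x + a2 * f2 x + a3 * f3 x + a4 * f4 x) \<in> schwartz" using schwartz_add[OF p3 schwartz_cmult[OF f(4)]] .
  have p5: "(\<lambda>x. a1 * f1 x + a2 * f2 x + a3 * f3 x + a4 * f4 x + a5 * f5 x) \<in> schwartz" using schwartz_add[OF p4 schwartz_cmult[OF f(5)]] .
  note ad = slin_add[OF A] and cm = slin_cmult[OF A]
  have "A (\<lambda>x. a1 * f1 x + a2 * f2 x + a3 * f3 x + a4 * f4 x + a5 * f5 x + a6 * f6 x)
      = (\<lambda>x. A (\<lambda>x. a1 * f1 x + a2 * f2 x + a3 * f3 x + a4 * f4 x + a5 * f5 x) x + a6 * A f6 x)"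
    using ad[OF p5 schwartz_cmult[OF f(6)]] cm[OF f(6)] by simp
  also have "A (\<lambda>x. a1 * f1 x + a2 * f2 x + a3 * f3 x + a4 * f4 x + a5 * f5 x)
      = (\<lambda>x. A (\<lambda>x. a1 * f1 x + a2 * f2 x + a3 * f3 x + a4 * f4 x) x + a5 * A f5 x)"
    using ad[OF p4 schwartz_cmult[OF f(5)]] cm[OF f(5)] by simp
  also have "A (\<lambda>x. a1 * f1 x + a2 * f2 x + a3 * f3 x + a4 * f4 x)
      = (\<lambda>x. A (\<lambda>x. a1 * f1 x + a2 * f2 x + a3 * f3 x) x + a4 * A f4 x)"
    using ad[OF p3 schwartz_cmult[OF f(4)]] cm[OF f(4)] by simp
  also have "A (\<lambda>x. a1 * f1 x + a2 * f2 x + a3 * f3 x)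
      = (\<lambda>x. A (\<lambda>x. a1 * f1 x + a2 * f2 x) x + a3 * A f3 x)"
    using ad[OF p2 schwartz_cmult[OF f(3)]] cm[OF f(3)] by simp
  also have "A (\<lambda>x. a1 * f1 x + a2 * f2 x) = (\<lambda>x. a1 * A f1 x + a2 * A f2 x)"
    using ad[OF schwartz_cmult[OF f(1)] schwartz_cmult[OF f(2)]] cm[OF f(1)] cm[OF f(2)] by simp
  finally show ?thesis .
qed

lemma inter_generic:
  assumes sA: "smap A" "slin A"
    and dA: "\<And>\<phi>. \<phi> \<in> schwartz \<Longrightarrow> dn 1 (A \<phi>) = A (D \<phi>)" and sD: "smap D"
    and xA: "\<And>\<phi>. \<phi> \<in> schwartz \<Longrightarrow> (\<lambda>x. complex_of_real x * A \<phi> x) = A (E \<phi>)" and sE: "smap E"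
    and pt: "\<And>\<phi>. \<phi> \<in> schwartz \<Longrightarrow> (\<lambda>x. p 0 0 * \<phi> x + p 0 1 * E \<phi> x + p 0 2 * E (E \<phi>) x + (\<i> * p 1 0) * D \<phi> x
         + (\<i> * p 1 1) * (\<phi> x + E (D \<phi>) x) + (- p 2 0) * D (D \<phi>) x) = Lc q \<phi>"
    and \<phi>: "\<phi> \<in> schwartz"
  shows "A (Lc q \<phi>) = Lc p (A \<phi>)"
proof -
  have D\<phi>: "D \<phi> \<in> schwartz" and E\<phi>: "E \<phi> \<in> schwartz" using sD sE \<phi> smapD1 by auto
  have EE: "E (E \<phi>) \<in> schwartz" and ED: "E (D \<phi>) \<in> schwartz" and DD: "D (D \<phi>) \<in> schwartz"
    using sD sE D\<phi> E\<phi> smapD1 by auto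
  have f5: "(\<lambda>x. \<phi> x + E (D \<phi>) x) \<in> schwartz" using \<phi> ED by (rule schwartz_add)
  have A5: "A (\<lambda>x. \<phi> x + E (D \<phi>) x) = (\<lambda>x. A \<phi> x + A (E (D \<phi>)) x)" using slin_add[OF sA(2) \<phi> ED] .
  have x2: "complex_of_real x ^ 2 * A \<phi> x = A (E (E \<phi>)) x" for x
    using fun_cong[OF xA[OF \<phi>], of x] fun_cong[OF xA[OF E\<phi>], of x] by (simp add: power2_eq_square mult.assoc)
  have x1: "complex_of_real x * A \<phi> x = A (E \<phi>) x" for x using fun_cong[OF xA[OF \<phi>], of x] by simp
  have d1: "dn 1 (A \<phi>) = A (D \<phi>)" using dA[OF \<phi>] .
  have d2: "dn 2 (A \<phi>) = A (D (D \<phi>))"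
    using dn_Suc'[of 1 "A \<phi>"] dA[OF \<phi>] dA[OF D\<phi>] by (simp add: numeral_2_eq_2)
  have xd: "complex_of_real x * dn 1 (A \<phi>) x = A (E (D \<phi>)) x" for x
    using fun_cong[OF xA[OF D\<phi>], of x] d1 by simp
  have "Lc p (A \<phi>) = (\<lambda>x. p 0 0 * A \<phi> x + p 0 1 * A (E \<phi>) x + p 0 2 * A (E (E \<phi>)) x + (\<i> * p 1 0) * A (D \<phi>) x
         + (\<i> * p 1 1) * A (\<lambda>x. \<phi> x + E (D \<phi>) x) x + (- p 2 0) * A (D (D \<phi>)) x)"
    unfolding Lc_def A5 using x1 x2 xd d1 d2 by (simp add: algebra_simps)
  also have "\<dots> = A (\<lambda>x. p 0 0 * \<phi> x + p 0 1 * E \<phi> x + p 0 2 * E (E \<phi>) x + (\<i> * p 1 0) * D \<phi> x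
         + (\<i> * p 1 1) * (\<phi> x + E (D \<phi>) x) + (- p 2 0) * D (D \<phi>) x)"
    by (rule slin6[OF sA(2) \<phi> E\<phi> EE D\<phi> f5 DD, symmetric])
  also have "\<dots> = A (Lc q \<phi>)" using pt[OF \<phi>] by simp
  finally show ?thesis by simp
qed

lemma generator:
  assumes sA: "smap A" "slin A" "stransp A"
    and sB: "smap B" "slin B" "stransp B"
    and inv: "\<And>\<phi>. \<phi> \<in> schwartz \<Longrightarrow> A (B \<phi>) = \<phi>" "\<And>\<phi>. \<phi> \<in> schwartz \<Longrightarrow> B (A \<phi>) = \<phi>"
    and dA: "\<And>\<phi>. \<phi> \<in> schwartz \<Longrightarrow> dn 1 (A \<phi>) = A (D \<phi>)" and sD: "smap D"
    and xA: "\<And>\<phi>. \<phi> \<in> schwartz \<Longrightarrow> (\<lambda>x. complex_of_real x * A \<phi> x) = A (E \<phi>)" and sE: "smap E"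
    and pt: "\<And>p \<phi>. \<phi> \<in> schwartz \<Longrightarrow> (\<lambda>x. p 0 0 * \<phi> x + p 0 1 * E \<phi> x + p 0 2 * E (E \<phi>) x + (\<i> * p 1 0) * D \<phi> x
         + (\<i> * p 1 1) * (\<phi> x + E (D \<phi>) x) + (- p 2 0) * D (D \<phi>) x) = Lc (cmp p a b c d) \<phi>"
  shows "goodM a b c d"
  unfolding goodM_def
proof (intro allI impI)
  fix p q assume w: "\<forall>x \<xi>. weyl_symbol q x \<xi> = weyl_symbol p (a * x + b * \<xi>) (c * x + d * \<xi>)"
  have "Lc q = Lc (cmp p a b c d)" by (rule Lc_cong) (simp add: w weyl_cmp)
  moreover have "EqL (Lc p) (Lc (cmp p a b c d))" unfolding EqL_def
  proof (rule framework_iff[where A=A and B=B and Lp="Lc p" and Lq="Lc (cmp p a b c d)", OF sA sB inv Lc_S Lc_S])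
    fix \<phi> :: "real \<Rightarrow> complex" assume \<phi>: "\<phi> \<in> schwartz"
    show "A (Lc (cmp p a b c d) \<phi>) = Lc p (A \<phi>)"
      by (rule inter_generic[where A=A and D=D and E=E and p=p and q="cmp p a b c d", OF sA(1,2) dA sD xA sE pt \<phi>])
  qed
  ultimately show "EqL (Lc p) (Lc q)" by simp
qed


lemma schwartz_deriv0: "\<phi> \<in> schwartz \<Longrightarrow> (\<phi> has_vector_derivative dn 1 \<phi> x) (at x)"
  by (metis One_nat_def dn.simps(1) schwartz_deriv)

lemma dn1_cdn1: "\<phi> \<in> schwartz \<Longrightarrow> dn 1 (\<lambda>x. a * dn 1 \<phi> x) = (\<lambda>x. a * dn 2 \<phi> x)"
  using dn_cmult[OF schwartz_dn1, of \<phi> 1 a] dn_Suc'[of 1 \<phi>] by (simp add: numeral_2_eq_2)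

lemma sn00_le: "\<phi> \<in> schwartz \<Longrightarrow> norm (\<phi> x) \<le> 1 * ssum 0 \<phi>"
  using sn_upper[of \<phi> x 0 0] sn_le_ssum[of \<phi> 0 0 0] by simp

definition dil :: "real \<Rightarrow> (real \<Rightarrow> complex) \<Rightarrow> real \<Rightarrow> complex" where
  "dil c \<phi> = (\<lambda>x. \<phi> (c * x))"

lemma dil_deriv:
  assumes a: "\<phi> \<in> schwartz"
  shows "(dil c \<phi> has_vector_derivative (complex_of_real c * dn 1 \<phi> (c * x))) (at x)"
proof -
  have 1: "((\<lambda>x. c * x) has_vector_derivative c) (at x)"
    using has_vector_derivative_mult_right[OF has_vector_derivative_id, of c "at x"] by simp
  have 2: "(\<phi> has_vector_derivative dn 1 \<phi> (c * x)) (at (c * x))" by (rule schwartz_deriv0[OF a])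
  from vector_diff_chain_at[OF 1 2] show ?thesis by (simp add: dil_def o_def scaleR_conv_of_real)
qed

lemma smap_dil:
  assumes c: "c \<noteq> 0"
  shows "smap (dil c)"
proof (rule smap_transfer[where D="\<lambda>\<phi> x. complex_of_real c * dn 1 \<phi> x" and E="\<lambda>\<phi> x. complex_of_real (1 / c) * (complex_of_real x * \<phi> x)"])
  show "\<And>\<phi> x. \<phi> \<in> schwartz \<Longrightarrow> (dil c \<phi> has_vector_derivative dil c (\<lambda>x. complex_of_real c * dn 1 \<phi> x) x) (at x)"
    using dil_deriv by (simp add: dil_def)
  show "smap (\<lambda>\<phi> x. complex_of_real c * dn 1 \<phi> x)" by (rule smap_scale[OF smap_dn1])
  show "smap (\<lambda>\<phi> x. complex_of_real (1 / c) * (complex_of_real x * \<phi> x))" by (rule smap_scale[OF smap_x])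
  show "(\<lambda>x. complex_of_real x * dil c \<phi> x) = dil c (\<lambda>x. complex_of_real (1 / c) * (complex_of_real x * \<phi> x))" for \<phi>
    using c by (auto simp: dil_def field_simps intro!: ext)
  show "\<exists>C N. \<forall>\<phi>\<in>schwartz. \<forall>x. norm (dil c \<phi> x) \<le> C * ssum N \<phi>"
    unfolding dil_def using sn00_le by blast
qed

lemma slin_dil: "slin (dil c)"
  unfolding slin_def dil_def by auto

lemma dil_inv: "c \<noteq> 0 \<Longrightarrow> dil c (dil (1 / c) \<phi>) = \<phi>"
  unfolding dil_def by auto

lemma stransp_dil:
  assumes c: "c \<noteq> 0"
  shows "stransp (dil c)"
  unfolding stransp_def
proof (intro ballI)
  fix f assume f: "f \<in> schwartz"
  define g where "g = (\<lambda>y. complex_of_real (1 / \<bar>c\<bar>) * dil (1 / c) f y)"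
  have g: "g \<in> schwartz" unfolding g_def using c f smap_dil[of "1/c"] smapD1 by (intro schwartz_cmult) auto
  show "\<exists>g\<in>schwartz. \<forall>\<phi>\<in>schwartz. (LINT x|lborel. f x * dil c \<phi> x) = (LINT x|lborel. g x * \<phi> x)"
  proof (intro bexI[OF _ g] ballI)
    fix \<phi> assume \<phi>: "\<phi> \<in> schwartz"
    define h where "h = (\<lambda>y. f (1 / c * y) * \<phi> y)"
    have "(LINT y|lborel. h y) = \<bar>c\<bar> *\<^sub>R (LINT x|lborel. h (0 + c * x))"
      by (rule lborel_integral_real_affine[OF c])
    also have "(\<lambda>x. h (0 + c * x)) = (\<lambda>x. f x * dil c \<phi> x)" using c by (auto simp: h_def dil_def)
    finally have e: "(LINT y|lborel. h y) = \<bar>c\<bar> *\<^sub>R (LINT x|lborel. f x * dil c \<phi> x)" .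
    have "(LINT x|lborel. g x * \<phi> x) = (LINT x|lborel. complex_of_real (1 / \<bar>c\<bar>) * h x)"
      unfolding g_def h_def dil_def by (simp add: mult.assoc)
    also have "\<dots> = complex_of_real (1 / \<bar>c\<bar>) * (LINT x|lborel. h x)" by simp
    also have "\<dots> = (LINT x|lborel. f x * dil c \<phi> x)" using c unfolding e by (simp add: scaleR_conv_of_real)
    finally show "(LINT x|lborel. f x * dil c \<phi> x) = (LINT x|lborel. g x * \<phi> x)" by simp
  qed
qed

lemma gD: "c \<noteq> 0 \<Longrightarrow> goodM (1 / c) 0 0 c"
proof -
  assume c: "c \<noteq> 0"
  have c': "1 / c \<noteq> 0" using c by simp
  show ?thesis
  proof (rule generator[where A="dil c" and B="dil (1 / c)" and D="\<lambda>\<phi> x. complex_of_real c * dn 1 \<phi> x"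
        and E="\<lambda>\<phi> x. complex_of_real (1 / c) * (complex_of_real x * \<phi> x)"])
    show "smap (dil c)" "slin (dil c)" "stransp (dil c)" using c by (auto simp: smap_dil slin_dil stransp_dil)
    show "smap (dil (1 / c))" "slin (dil (1 / c))" "stransp (dil (1 / c))" using c' by (auto simp: smap_dil slin_dil stransp_dil)
    show "dil c (dil (1 / c) \<phi>) = \<phi>" for \<phi> using dil_inv[OF c] .
    show "dil (1 / c) (dil c \<phi>) = \<phi>" for \<phi> using dil_inv[OF c'] by simp
    show "dn 1 (dil c \<phi>) = dil c (\<lambda>x. complex_of_real c * dn 1 \<phi> x)" if "\<phi> \<in> schwartz" for \<phi>
      using dil_deriv[OF that] by (auto intro!: ext vector_derivative_at simp: dil_def dn.simps)
    show "smap (\<lambda>\<phi> x. complex_of_real c * dn 1 \<phi> x)" by (rule smap_scale[OF smap_dn1])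
    show "smap (\<lambda>\<phi> x. complex_of_real (1 / c) * (complex_of_real x * \<phi> x))" by (rule smap_scale[OF smap_x])
    show "(\<lambda>x. complex_of_real x * dil c \<phi> x) = dil c (\<lambda>x. complex_of_real (1 / c) * (complex_of_real x * \<phi> x))" for \<phi>
      using c by (auto simp: dil_def field_simps intro!: ext)
    fix p :: "nat \<Rightarrow> nat \<Rightarrow> complex" and \<phi> assume \<phi>: "\<phi> \<in> schwartz"
    show "(\<lambda>x. p 0 0 * \<phi> x + p 0 1 * (complex_of_real (1 / c) * (complex_of_real x * \<phi> x))
          + p 0 2 * (complex_of_real (1 / c) * (complex_of_real x * (complex_of_real (1 / c) * (complex_of_real x * \<phi> x))))
          + \<i> * p 1 0 * (complex_of_real c * dn 1 \<phi> x)
          + \<i> * p 1 1 * (\<phi> x + complex_of_real (1 / c) * (complex_of_real x * (complex_of_real c * dn 1 \<phi> x)))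
          + - p 2 0 * (complex_of_real c * dn 1 (\<lambda>x. complex_of_real c * dn 1 \<phi> x) x)) =
          Lc (cmp p (1 / c) 0 0 c) \<phi>"
      unfolding dn1_cdn1[OF \<phi>] Lc_def cmp_def Let_def using c
      by (auto intro!: ext simp: field_simps power2_eq_square)
  qed
qed


definition ee :: "real \<Rightarrow> real \<Rightarrow> complex" where
  "ee s x = exp (\<i> * complex_of_real (- s * x^2 / 2))"

definition shr :: "real \<Rightarrow> (real \<Rightarrow> complex) \<Rightarrow> real \<Rightarrow> complex" where
  "shr s \<phi> = (\<lambda>x. ee s x * \<phi> x)"

lemma ee_deriv: "(ee s has_vector_derivative (\<i> * complex_of_real (- s * x)) * ee s x) (at x)"
proof -
  have "((\<lambda>z. exp (\<i> * (- complex_of_real s * z^2 / 2))) has_field_derivative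
        exp (\<i> * (- complex_of_real s * (complex_of_real x)^2 / 2)) * (\<i> * (- complex_of_real s * (2 * complex_of_real x) / 2)))
        (at (complex_of_real x))"
    by (auto intro!: derivative_eq_intros simp: power2_eq_square)
  from has_vector_derivative_real_field[OF this, of UNIV]
  have "((\<lambda>x. exp (\<i> * (- complex_of_real s * (complex_of_real x)^2 / 2))) has_vector_derivative
        exp (\<i> * (- complex_of_real s * (complex_of_real x)^2 / 2)) * (\<i> * (- complex_of_real s * (2 * complex_of_real x) / 2))) (at x)"
    by simp
  moreover have "(\<lambda>x. exp (\<i> * (- complex_of_real s * (complex_of_real x)^2 / 2))) = ee s"
    by (auto simp: ee_def fun_eq_iff)
  ultimately have D: "(ee s has_vector_derivative
        exp (\<i> * (- complex_of_real s * (complex_of_real x)^2 / 2)) * (\<i> * (- complex_of_real s * (2 * complex_of_real x) / 2))) (at x)"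
    by simp
  show ?thesis by (rule has_vector_derivative_eq_rhs[OF D]) (simp add: ee_def algebra_simps)
qed

lemma norm_ee: "norm (ee s x) = 1"
  unfolding ee_def by (rule norm_exp_i_times)

lemma ee_inv: "ee s x * ee (- s) x = 1"
  unfolding ee_def by (simp add: exp_add[symmetric] algebra_simps)

lemma shr_deriv:
  assumes a: "\<phi> \<in> schwartz"
  shows "(shr s \<phi> has_vector_derivative shr s (\<lambda>x. 1 * dn 1 \<phi> x + (\<i> * complex_of_real (- s)) * (complex_of_real x * \<phi> x)) x) (at x)"
proof -
  have "((\<lambda>x. ee s x * \<phi> x) has_vector_derivative (ee s x * dn 1 \<phi> x + (\<i> * complex_of_real (- s * x)) * ee s x * \<phi> x)) (at x)"
    by (rule has_vector_derivative_mult[OF ee_deriv schwartz_deriv0[OF a]])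
  then show ?thesis unfolding shr_def by (simp add: algebra_simps)
qed

lemma smap_shr: "smap (shr s)"
proof (rule smap_transfer[where D="\<lambda>\<phi> x. 1 * dn 1 \<phi> x + (\<i> * complex_of_real (- s)) * (complex_of_real x * \<phi> x)"
      and E="\<lambda>\<phi> x. complex_of_real x * \<phi> x"])
  show "\<And>\<phi> x. \<phi> \<in> schwartz \<Longrightarrow> (shr s \<phi> has_vector_derivative shr s (\<lambda>x. 1 * dn 1 \<phi> x + (\<i> * complex_of_real (- s)) * (complex_of_real x * \<phi> x)) x) (at x)"
    by (rule shr_deriv)
  show "smap (\<lambda>\<phi> x. 1 * dn 1 \<phi> x + (\<i> * complex_of_real (- s)) * (complex_of_real x * \<phi> x))"
    by (rule smap_lin[OF smap_dn1 smap_x])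
  show "smap (\<lambda>\<phi> x. complex_of_real x * \<phi> x)" by (rule smap_x)
  show "(\<lambda>x. complex_of_real x * shr s \<phi> x) = shr s (\<lambda>x. complex_of_real x * \<phi> x)" for \<phi>
    by (auto simp: shr_def)
  show "\<exists>C N. \<forall>\<phi>\<in>schwartz. \<forall>x. norm (shr s \<phi> x) \<le> C * ssum N \<phi>"
  proof (intro exI[of _ "1::real"] exI[of _ "0::nat"] ballI allI)
    fix \<phi> x assume "\<phi> \<in> schwartz"
    then show "norm (shr s \<phi> x) \<le> 1 * ssum 0 \<phi>" using sn00_le[of \<phi> x] by (simp add: shr_def norm_mult norm_ee)
  qed
qed

lemma slin_shr: "slin (shr s)"
  unfolding slin_def shr_def by (auto simp: algebra_simps)

lemma shr_inv: "shr s (shr (- s) \<phi>) = \<phi>"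
  unfolding shr_def using ee_inv by (auto simp: mult.assoc[symmetric])

lemma stransp_shr: "stransp (shr s)"
  unfolding stransp_def
proof (intro ballI)
  fix f assume f: "f \<in> schwartz"
  have g: "shr s f \<in> schwartz" using smap_shr f smapD1 by blast
  show "\<exists>g\<in>schwartz. \<forall>\<phi>\<in>schwartz. (LINT x|lborel. f x * shr s \<phi> x) = (LINT x|lborel. g x * \<phi> x)"
    by (intro bexI[OF _ g] ballI) (simp add: shr_def algebra_simps)
qed

lemma gS: "goodM 1 0 s 1"
proof (rule generator[where A="shr s" and B="shr (- s)"
      and D="\<lambda>\<phi> x. 1 * dn 1 \<phi> x + (\<i> * complex_of_real (- s)) * (complex_of_real x * \<phi> x)"
      and E="\<lambda>\<phi> x. complex_of_real x * \<phi> x"])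
  show "smap (shr s)" "slin (shr s)" "stransp (shr s)" by (auto simp: smap_shr slin_shr stransp_shr)
  show "smap (shr (- s))" "slin (shr (- s))" "stransp (shr (- s))" by (auto simp: smap_shr slin_shr stransp_shr)
  show "shr s (shr (- s) \<phi>) = \<phi>" for \<phi> by (rule shr_inv)
  show "shr (- s) (shr s \<phi>) = \<phi>" for \<phi> using shr_inv[of "- s"] by simp
  show "dn 1 (shr s \<phi>) = shr s (\<lambda>x. 1 * dn 1 \<phi> x + (\<i> * complex_of_real (- s)) * (complex_of_real x * \<phi> x))"
    if "\<phi> \<in> schwartz" for \<phi>
    using shr_deriv[OF that] by (auto intro!: ext vector_derivative_at simp: dn.simps)
  show "smap (\<lambda>\<phi> x. 1 * dn 1 \<phi> x + (\<i> * complex_of_real (- s)) * (complex_of_real x * \<phi> x))"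
    by (rule smap_lin[OF smap_dn1 smap_x])
  show "smap (\<lambda>\<phi> x. complex_of_real x * \<phi> x)" by (rule smap_x)
  show "(\<lambda>x. complex_of_real x * shr s \<phi> x) = shr s (\<lambda>x. complex_of_real x * \<phi> x)" for \<phi>
    by (auto simp: shr_def)
  fix p :: "nat \<Rightarrow> nat \<Rightarrow> complex" and \<phi> assume \<phi>: "\<phi> \<in> schwartz"
  have dD: "dn 1 (\<lambda>x. 1 * dn 1 \<phi> x + (\<i> * complex_of_real (- s)) * (complex_of_real x * \<phi> x))
      = (\<lambda>x. dn 2 \<phi> x + (\<i> * complex_of_real (- s)) * (\<phi> x + complex_of_real x * dn 1 \<phi> x))"
    using dn_lin[OF schwartz_dn1[OF \<phi>] schwartz_xmult[OF \<phi>], of 1 1 "\<i> * complex_of_real (- s)"]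
      dn1_x[OF \<phi>] dn_Suc'[of 1 \<phi>] by (simp add: numeral_2_eq_2)
  show "(\<lambda>x. p 0 0 * \<phi> x + p 0 1 * (complex_of_real x * \<phi> x) + p 0 2 * (complex_of_real x * (complex_of_real x * \<phi> x))
     + \<i> * p 1 0 * (1 * dn 1 \<phi> x + \<i> * complex_of_real (- s) * (complex_of_real x * \<phi> x))
     + \<i> * p 1 1 * (\<phi> x + complex_of_real x * (1 * dn 1 \<phi> x + \<i> * complex_of_real (- s) * (complex_of_real x * \<phi> x)))
     + - p 2 0 * (1 * dn 1 (\<lambda>x. 1 * dn 1 \<phi> x + \<i> * complex_of_real (- s) * (complex_of_real x * \<phi> x)) x
         + \<i> * complex_of_real (- s) * (complex_of_real x * (1 * dn 1 \<phi> x + \<i> * complex_of_real (- s) * (complex_of_real x * \<phi> x))))) =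
     Lc (cmp p 1 0 s 1) \<phi>"
    unfolding dD Lc_def cmp_def Let_def
    by (rule ext) (simp add: power2_eq_square algebra_simps)
qed


definition FT :: "(real \<Rightarrow> complex) \<Rightarrow> real \<Rightarrow> complex" where
  "FT \<phi> = (\<lambda>\<xi>. CLINT x|lborel. iexp (- (x * \<xi>)) * \<phi> x)"

lemma iexp_borel[measurable]: "iexp \<in> borel_measurable borel"
  by (intro borel_measurable_continuous_onI continuous_intros)

lemma norm_iexp[simp]: "norm (iexp t) = 1"
  by (rule norm_exp_i_times)

lemma iexp_add: "iexp (a + b) = iexp a * iexp b"
  by (simp add: exp_add[symmetric] algebra_simps)

lemma integrable_iexp_S: "\<phi> \<in> schwartz \<Longrightarrow> integrable lborel (\<lambda>x. iexp (f x) * \<phi> x)" if "f \<in> borel_measurable lborel"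
  by (rule integrable_bounded_mult[where B=1]) (use that in auto)

lemma integrable_FT: "\<phi> \<in> schwartz \<Longrightarrow> integrable lborel (\<lambda>x. iexp (- (x * \<xi>)) * \<phi> x)"
  by (rule integrable_iexp_S) auto

lemma FT_bound: "\<phi> \<in> schwartz \<Longrightarrow> norm (FT \<phi> \<xi>) \<le> (2 * pi) * ssum 2 \<phi>"
proof -
  assume \<phi>: "\<phi> \<in> schwartz"
  have "norm (FT \<phi> \<xi>) \<le> (LINT x|lborel. norm (iexp (- (x * \<xi>)) * \<phi> x))"
    unfolding FT_def by (rule integral_norm_bound)
  also have "\<dots> = (LINT x|lborel. norm (\<phi> x))" by (simp add: norm_mult)
  also have "\<dots> \<le> pi * (sn 0 0 \<phi> + sn 2 0 \<phi>)" by (rule L1_bound[OF \<phi>])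
  also have "\<dots> \<le> pi * (ssum 2 \<phi> + ssum 2 \<phi>)"
    by (intro mult_left_mono add_mono sn_le_ssum \<phi>) auto
  finally show ?thesis by simp
qed

lemma slin_FT: "slin FT"
  unfolding slin_def
proof (intro conjI ballI allI)
  fix \<phi> \<psi> assume \<phi>: "\<phi> \<in> schwartz" and \<psi>: "\<psi> \<in> schwartz"
  show "FT (\<lambda>x. \<phi> x + \<psi> x) = (\<lambda>x. FT \<phi> x + FT \<psi> x)"
    unfolding FT_def using integrable_FT[OF \<phi>] integrable_FT[OF \<psi>]
    by (auto intro!: ext simp: distrib_left)
next
  fix \<phi> c assume \<phi>: "\<phi> \<in> schwartz"
  show "FT (\<lambda>x. c * \<phi> x) = (\<lambda>x. c * FT \<phi> x)"
    unfolding FT_def by (auto intro!: ext simp: mult.left_commute)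
qed

lemma iexp_taylor1: "norm (iexp t - (1 + \<i> * t)) \<le> t^2 / 2"
  using iexp_approx1[of t 1] by (simp add: power2_eq_square)

lemma FT_taylor:
  assumes \<phi>: "\<phi> \<in> schwartz"
  shows "norm (FT \<phi> (\<xi> + h) - FT \<phi> \<xi> - of_real h * FT (\<lambda>x. (- \<i>) * (complex_of_real x * \<phi> x)) \<xi>)
      \<le> h^2 / 2 * (LINT x|lborel. norm (complex_of_real x ^ 2 * \<phi> x))"
proof -
  have x\<phi>: "(\<lambda>x. (- \<i>) * (complex_of_real x * \<phi> x)) \<in> schwartz" using \<phi> by (intro schwartz_cmult schwartz_xmult)
  have x2\<phi>: "(\<lambda>x. complex_of_real x ^ 2 * \<phi> x) \<in> schwartz" using \<phi> by (rule schwartz_xpow)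
  have i1: "integrable lborel (\<lambda>x. iexp (- (x * (\<xi> + h))) * \<phi> x)" by (rule integrable_FT[OF \<phi>])
  have i2: "integrable lborel (\<lambda>x. iexp (- (x * \<xi>)) * \<phi> x)" by (rule integrable_FT[OF \<phi>])
  have i3: "integrable lborel (\<lambda>x. iexp (- (x * \<xi>)) * ((- \<i>) * (complex_of_real x * \<phi> x)))" by (rule integrable_FT[OF x\<phi>])
  have eq: "FT \<phi> (\<xi> + h) - FT \<phi> \<xi> - of_real h * FT (\<lambda>x. (- \<i>) * (complex_of_real x * \<phi> x)) \<xi>
      = (CLINT x|lborel. iexp (- (x * (\<xi> + h))) * \<phi> x - iexp (- (x * \<xi>)) * \<phi> x
            - of_real h * (iexp (- (x * \<xi>)) * ((- \<i>) * (complex_of_real x * \<phi> x))))"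
  proof -
    have "(CLINT x|lborel. iexp (- (x * (\<xi> + h))) * \<phi> x - iexp (- (x * \<xi>)) * \<phi> x
            - of_real h * (iexp (- (x * \<xi>)) * ((- \<i>) * (complex_of_real x * \<phi> x))))
        = (CLINT x|lborel. iexp (- (x * (\<xi> + h))) * \<phi> x - iexp (- (x * \<xi>)) * \<phi> x)
          - (CLINT x|lborel. of_real h * (iexp (- (x * \<xi>)) * ((- \<i>) * (complex_of_real x * \<phi> x))))"
      by (rule Bochner_Integration.integral_diff) (use i1 i2 i3 in auto)
    also have "(CLINT x|lborel. iexp (- (x * (\<xi> + h))) * \<phi> x - iexp (- (x * \<xi>)) * \<phi> x)
        = (CLINT x|lborel. iexp (- (x * (\<xi> + h))) * \<phi> x) - (CLINT x|lborel. iexp (- (x * \<xi>)) * \<phi> x)"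
      by (rule Bochner_Integration.integral_diff[OF i1 i2])
    also have "(CLINT x|lborel. of_real h * (iexp (- (x * \<xi>)) * ((- \<i>) * (complex_of_real x * \<phi> x))))
        = of_real h * (CLINT x|lborel. iexp (- (x * \<xi>)) * ((- \<i>) * (complex_of_real x * \<phi> x)))"
      by (rule integral_mult_right_zero)
    finally show ?thesis unfolding FT_def by simp
  qed
  have "norm (CLINT x|lborel. iexp (- (x * (\<xi> + h))) * \<phi> x - iexp (- (x * \<xi>)) * \<phi> x
            - of_real h * (iexp (- (x * \<xi>)) * ((- \<i>) * (complex_of_real x * \<phi> x)))) \<le> (LINT x|lborel. norm (iexp (- (x * (\<xi> + h))) * \<phi> x - iexp (- (x * \<xi>)) * \<phi> x
            - of_real h * (iexp (- (x * \<xi>)) * ((- \<i>) * (complex_of_real x * \<phi> x)))))"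
    by (rule integral_norm_bound)
  also have "\<dots> \<le> (LINT x|lborel. h^2 / 2 * norm (complex_of_real x ^ 2 * \<phi> x))"
  proof (rule Bochner_Integration.integral_mono)
    show "integrable lborel (\<lambda>x. norm (iexp (- (x * (\<xi> + h))) * \<phi> x - iexp (- (x * \<xi>)) * \<phi> x
            - of_real h * (iexp (- (x * \<xi>)) * ((- \<i>) * (complex_of_real x * \<phi> x)))))"
      using i1 i2 i3 by (intro integrable_norm Bochner_Integration.integrable_diff integrable_mult_right) auto
    show "integrable lborel (\<lambda>x. h^2 / 2 * norm (complex_of_real x ^ 2 * \<phi> x))"
      using schwartz_integrable[OF x2\<phi>] by auto
    fix x
    have "iexp (- (x * (\<xi> + h))) * \<phi> x - iexp (- (x * \<xi>)) * \<phi> x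
            - of_real h * (iexp (- (x * \<xi>)) * ((- \<i>) * (complex_of_real x * \<phi> x)))
        = iexp (- (x * \<xi>)) * \<phi> x * (iexp (- (x * h)) - (1 + \<i> * (- (x * h))))"
      using iexp_add[of "- (x * \<xi>)" "- (x * h)"] by (simp add: algebra_simps)
    then have "norm (iexp (- (x * (\<xi> + h))) * \<phi> x - iexp (- (x * \<xi>)) * \<phi> x
            - of_real h * (iexp (- (x * \<xi>)) * ((- \<i>) * (complex_of_real x * \<phi> x))))
        = norm (\<phi> x) * norm (iexp (- (x * h)) - (1 + \<i> * (- (x * h))))"
      by (simp add: norm_mult)
    also have "\<dots> \<le> norm (\<phi> x) * ((- (x * h))^2 / 2)"
      by (intro mult_left_mono iexp_taylor1) auto
    also have "\<dots> = h^2 / 2 * norm (complex_of_real x ^ 2 * \<phi> x)"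
      by (simp add: norm_mult norm_power power_mult_distrib)
    finally show "norm (iexp (- (x * (\<xi> + h))) * \<phi> x - iexp (- (x * \<xi>)) * \<phi> x
            - of_real h * (iexp (- (x * \<xi>)) * ((- \<i>) * (complex_of_real x * \<phi> x))))
        \<le> h^2 / 2 * norm (complex_of_real x ^ 2 * \<phi> x)" .
  qed
  also have "\<dots> = h^2 / 2 * (LINT x|lborel. norm (complex_of_real x ^ 2 * \<phi> x))" by simp
  finally show ?thesis unfolding eq .
qed

lemma FT_deriv:
  assumes \<phi>: "\<phi> \<in> schwartz"
  shows "(FT \<phi> has_vector_derivative FT (\<lambda>x. (- \<i>) * (complex_of_real x * \<phi> x)) \<xi>) (at \<xi>)"
proof -
  define G where "G = FT (\<lambda>x. (- \<i>) * (complex_of_real x * \<phi> x)) \<xi>"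
  define K where "K = (LINT x|lborel. norm (complex_of_real x ^ 2 * \<phi> x)) / 2"
  have K: "K \<ge> 0" unfolding K_def by simp
  have bnd: "norm (FT \<phi> y - FT \<phi> \<xi> - (y - \<xi>) *\<^sub>R G) \<le> K * (y - \<xi>)^2" for y
    using FT_taylor[OF \<phi>, of \<xi> "y - \<xi>"] unfolding G_def K_def by (simp add: scaleR_conv_of_real field_simps)
  show ?thesis unfolding has_vector_derivative_def has_derivative_at'
  proof (intro conjI allI impI)
    show "bounded_linear (\<lambda>h. h *\<^sub>R FT (\<lambda>x. (- \<i>) * (complex_of_real x * \<phi> x)) \<xi>)"
      by (rule bounded_linear_scaleR_left)
    fix e :: real assume e: "e > 0"
    show "\<exists>d>0. \<forall>x'. 0 < norm (x' - \<xi>) \<and> norm (x' - \<xi>) < d \<longrightarrow>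
        norm (FT \<phi> x' - FT \<phi> \<xi> - (x' - \<xi>) *\<^sub>R FT (\<lambda>x. (- \<i>) * (complex_of_real x * \<phi> x)) \<xi>) / norm (x' - \<xi>) < e"
    proof (intro exI[of _ "e / (K + 1)"] conjI allI impI)
      show "e / (K + 1) > 0" using e K by auto
      fix y assume y: "0 < norm (y - \<xi>) \<and> norm (y - \<xi>) < e / (K + 1)"
      have "norm (FT \<phi> y - FT \<phi> \<xi> - (y - \<xi>) *\<^sub>R G) / norm (y - \<xi>) \<le> K * (y - \<xi>)^2 / norm (y - \<xi>)"
        using bnd[of y] y by (intro divide_right_mono) auto
      also have "\<dots> = K * norm (y - \<xi>)"
      proof -
        obtain r where r: "r = norm (y - \<xi>)" "r > 0" using y by blast
        have "(y - \<xi>)^2 = r^2" using r by simp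
        then have "K * (y - \<xi>)^2 / norm (y - \<xi>) = K * r^2 / r" by (simp only: r(1)[symmetric])
        also have "\<dots> = K * r" using r(2) by (simp add: power2_eq_square)
        finally show ?thesis using r(1) by metis
      qed
      also have "\<dots> \<le> K * (e / (K + 1))" using y K by (intro mult_left_mono) auto
      also have "\<dots> < e" using e K by (simp add: field_simps)
      finally show "norm (FT \<phi> y - FT \<phi> \<xi> - (y - \<xi>) *\<^sub>R FT (\<lambda>x. (- \<i>) * (complex_of_real x * \<phi> x)) \<xi>) / norm (y - \<xi>) < e"
        unfolding G_def .
    qed
  qed
qed


lemma inv_sq_tendsto_top: "((\<lambda>x::real. inverse (1 + x^2)) \<longlongrightarrow> 0) at_top"
  by real_asymp

lemma inv_sq_tendsto_bot: "((\<lambda>x::real. inverse (1 + x^2)) \<longlongrightarrow> 0) at_bot"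
  by real_asymp

lemma schwartz_tendsto:
  assumes \<phi>: "\<phi> \<in> schwartz" and g: "\<And>x. norm (g x) = norm (\<phi> x)"
  shows "(g \<longlongrightarrow> 0) at_top" "(g \<longlongrightarrow> 0) at_bot"
proof -
  define C where "C = sn 0 0 \<phi> + sn 2 0 \<phi>"
  have b: "norm (g x) \<le> C * inverse (1 + x^2)" for x using schwartz_decay[OF \<phi>, of x] g unfolding C_def by simp
  show "(g \<longlongrightarrow> 0) at_top"
    by (rule Lim_null_comparison[OF always_eventually[OF allI[OF b]]])
       (use tendsto_mult_right_zero[OF inv_sq_tendsto_top, of C] in simp)
  show "(g \<longlongrightarrow> 0) at_bot"
    by (rule Lim_null_comparison[OF always_eventually[OF allI[OF b]]])
       (use tendsto_mult_right_zero[OF inv_sq_tendsto_bot, of C] in simp)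
qed

lemma int_deriv_zero:
  fixes g g' :: "real \<Rightarrow> complex"
  assumes d: "\<And>x. (g has_vector_derivative g' x) (at x)" and c: "\<And>x. isCont g' x"
    and i: "integrable lborel g'" and t1: "(g \<longlongrightarrow> 0) at_top" and t2: "(g \<longlongrightarrow> 0) at_bot"
  shows "(CLINT x|lborel. g' x) = 0"
proof -
  have "(LBINT x=-\<infinity>..\<infinity>. g' x) = 0 - 0"
  proof (rule interval_integral_FTC_integrable[where F=g])
    show "- \<infinity> < (\<infinity>::ereal)" by simp
    show "set_integrable lborel (einterval (- \<infinity>) \<infinity>) g'"
      unfolding set_integrable_def einterval_eq_UNIV using i by simp
    show "((g \<circ> real_of_ereal) \<longlongrightarrow> 0) (at_right (- \<infinity>))" using t2 by (simp add: ereal_tendsto_simps1)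
    show "((g \<circ> real_of_ereal) \<longlongrightarrow> 0) (at_left \<infinity>)" using t1 by (simp add: ereal_tendsto_simps1)
  qed (use d c in auto)
  then show ?thesis
    unfolding interval_lebesgue_integral_def set_lebesgue_integral_def einterval_eq_UNIV by simp
qed

lemma iexp_lin_deriv: "((\<lambda>x. iexp (- (x * \<xi>))) has_vector_derivative (\<i> * complex_of_real (- \<xi>)) * iexp (- (x * \<xi>))) (at x)"
proof -
  have 1: "((\<lambda>x. - (x * \<xi>)) has_vector_derivative (- \<xi>)) (at x)"
    unfolding has_real_derivative_iff_has_vector_derivative[symmetric] by (auto intro!: derivative_eq_intros)
  have 2: "(iexp has_vector_derivative \<i> * iexp (- (x * \<xi>))) (at (- (x * \<xi>)))"
    by (rule has_vector_derivative_iexp)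
  from vector_diff_chain_at[OF 1 2] show ?thesis by (simp add: o_def scaleR_conv_of_real algebra_simps)
qed

lemma FT_dn1:
  assumes \<phi>: "\<phi> \<in> schwartz"
  shows "FT (dn 1 \<phi>) \<xi> = \<i> * complex_of_real \<xi> * FT \<phi> \<xi>"
proof -
  define \<psi> where "\<psi> = (\<lambda>x. (- \<i> * complex_of_real \<xi>) * \<phi> x + 1 * dn 1 \<phi> x)"
  have \<psi>: "\<psi> \<in> schwartz" unfolding \<psi>_def using \<phi> schwartz_dn1 by (intro schwartz_lin)
  have "FT \<psi> \<xi> = (- \<i> * complex_of_real \<xi>) * FT \<phi> \<xi> + 1 * FT (dn 1 \<phi>) \<xi>"
  proof -
    have "FT \<psi> = (\<lambda>x. FT (\<lambda>x. (- \<i> * complex_of_real \<xi>) * \<phi> x) x + FT (\<lambda>x. 1 * dn 1 \<phi> x) x)"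
      unfolding \<psi>_def by (rule slin_add[OF slin_FT schwartz_cmult[OF \<phi>] schwartz_cmult[OF schwartz_dn1[OF \<phi>]]])
    then show ?thesis
      using slin_cmult[OF slin_FT \<phi>, of "- \<i> * complex_of_real \<xi>"] slin_cmult[OF slin_FT schwartz_dn1[OF \<phi>], of 1]
      by simp
  qed
  moreover have "FT \<psi> \<xi> = 0"
  proof -
    have "FT \<psi> \<xi> = (CLINT x|lborel. iexp (- (x * \<xi>)) * \<psi> x)" unfolding FT_def ..
    also have "\<dots> = 0"
    proof (rule int_deriv_zero[where g="\<lambda>x. iexp (- (x * \<xi>)) * \<phi> x"])
      fix x
      show "((\<lambda>x. iexp (- (x * \<xi>)) * \<phi> x) has_vector_derivative iexp (- (x * \<xi>)) * \<psi> x) (at x)"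
        by (rule has_vector_derivative_eq_rhs[OF has_vector_derivative_mult[OF iexp_lin_deriv schwartz_deriv0[OF \<phi>]]])
           (simp add: \<psi>_def algebra_simps)
      have "continuous_on UNIV \<psi>" using schwartz_cont[OF \<psi>, of 0] by simp
      then show "isCont (\<lambda>x. iexp (- (x * \<xi>)) * \<psi> x) x"
        by (intro continuous_intros) (simp add: continuous_on_eq_continuous_at)
    next
      show "integrable lborel (\<lambda>x. iexp (- (x * \<xi>)) * \<psi> x)" by (rule integrable_FT[OF \<psi>])
      show "((\<lambda>x. iexp (- (x * \<xi>)) * \<phi> x) \<longlongrightarrow> 0) at_top" "((\<lambda>x. iexp (- (x * \<xi>)) * \<phi> x) \<longlongrightarrow> 0) at_bot"
        by (rule schwartz_tendsto[OF \<phi>], simp add: norm_mult)+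
    qed
    finally show ?thesis .
  qed
  ultimately show ?thesis by (simp add: algebra_simps)
qed

lemma smap_FT: "smap FT"
proof (rule smap_transfer[where D="\<lambda>\<phi> x. (- \<i>) * (complex_of_real x * \<phi> x)" and E="\<lambda>\<phi> x. (- \<i>) * dn 1 \<phi> x"])
  show "\<And>\<phi> x. \<phi> \<in> schwartz \<Longrightarrow> (FT \<phi> has_vector_derivative FT (\<lambda>x. (- \<i>) * (complex_of_real x * \<phi> x)) x) (at x)"
    by (rule FT_deriv)
  show "smap (\<lambda>\<phi> x. (- \<i>) * (complex_of_real x * \<phi> x))" by (rule smap_scale[OF smap_x])
  show "smap (\<lambda>\<phi> x. (- \<i>) * dn 1 \<phi> x)" by (rule smap_scale[OF smap_dn1])
  show "(\<lambda>x. complex_of_real x * FT \<phi> x) = FT (\<lambda>x. (- \<i>) * dn 1 \<phi> x)" if \<phi>: "\<phi> \<in> schwartz" for \<phi>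
  proof -
    have "FT (\<lambda>x. (- \<i>) * dn 1 \<phi> x) = (\<lambda>x. (- \<i>) * FT (dn 1 \<phi>) x)"
      by (rule slin_cmult[OF slin_FT schwartz_dn1[OF \<phi>]])
    also have "\<dots> = (\<lambda>x. ((- \<i>) * \<i>) * complex_of_real x * FT \<phi> x)" unfolding FT_dn1[OF \<phi>] by (simp add: mult.assoc)
    also have "\<dots> = (\<lambda>x. complex_of_real x * FT \<phi> x)" by simp
    finally show ?thesis by simp
  qed
  show "\<exists>C N. \<forall>\<phi>\<in>schwartz. \<forall>x. norm (FT \<phi> x) \<le> C * ssum N \<phi>"
    using FT_bound by blast
qed


lemma fubini_iexp:
  fixes u v :: "real \<Rightarrow> complex" and k :: "real \<Rightarrow> real \<Rightarrow> real"
  assumes u: "integrable lborel u" and v: "integrable lborel v"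
    and km: "(\<lambda>p. k (fst p) (snd p)) \<in> borel_measurable (lborel \<Otimes>\<^sub>M lborel)"
    and km2: "\<And>x. (\<lambda>y. k x y) \<in> borel_measurable lborel"
  shows "(CLINT y|lborel. CLINT x|lborel. v y * (iexp (k x y) * u x)) = (CLINT x|lborel. CLINT y|lborel. v y * (iexp (k x y) * u x))"
proof (rule lborel_pair.Fubini_integral)
  have [measurable]: "u \<in> borel_measurable lborel" "v \<in> borel_measurable lborel"
    using u v by auto
  note km[measurable]
  show "integrable (lborel \<Otimes>\<^sub>M lborel) (\<lambda>(x, y). v y * (iexp (k x y) * u x))"
  proof (rule lborel_pair.Fubini_integrable)
    show "(\<lambda>(x, y). v y * (iexp (k x y) * u x)) \<in> borel_measurable (lborel \<Otimes>\<^sub>M lborel)"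
    proof -
      have "(\<lambda>p. v (snd p) * (iexp (k (fst p) (snd p)) * u (fst p))) \<in> borel_measurable (lborel \<Otimes>\<^sub>M lborel)"
        by measurable
      then show ?thesis by (simp add: case_prod_beta')
    qed
    have e: "(\<lambda>x. LINT y|lborel. norm (case (x, y) of (x, y) \<Rightarrow> v y * (iexp (k x y) * u x)))
        = (\<lambda>x. norm (u x) * (LINT y|lborel. norm (v y)))"
      by (auto intro!: ext simp: norm_mult mult.commute)
    show "integrable lborel (\<lambda>x. LINT y|lborel. norm (case (x, y) of (x, y) \<Rightarrow> v y * (iexp (k x y) * u x)))"
      unfolding e using u by auto
    show "AE x in lborel. integrable lborel (\<lambda>y. case (x, y) of (x, y) \<Rightarrow> v y * (iexp (k x y) * u x))"
    proof (intro AE_I2)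
      fix x
      have [measurable]: "(\<lambda>y. k x y) \<in> borel_measurable lborel" by (rule km2)
      show "integrable lborel (\<lambda>y. case (x, y) of (x, y) \<Rightarrow> v y * (iexp (k x y) * u x))"
      proof (rule Bochner_Integration.integrable_bound[where f="\<lambda>y. norm (u x) * norm (v y)" and M=lborel])
        show "integrable lborel (\<lambda>y. norm (u x) * norm (v y))" using v by auto
        show "(\<lambda>y. case (x, y) of (x, y) \<Rightarrow> v y * (iexp (k x y) * u x)) \<in> borel_measurable lborel" by simp
        show "AE y in lborel. norm (case (x, y) of (x, y) \<Rightarrow> v y * (iexp (k x y) * u x)) \<le> norm (norm (u x) * norm (v y))"
          by (auto simp: norm_mult)
      qed
    qed
  qed
qed

lemma stransp_FT: "stransp FT"
  unfolding stransp_def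
proof (intro ballI)
  fix f assume f: "f \<in> schwartz"
  have g: "FT f \<in> schwartz" using smap_FT f smapD1 by blast
  show "\<exists>g\<in>schwartz. \<forall>\<phi>\<in>schwartz. (CLINT x|lborel. f x * FT \<phi> x) = (CLINT x|lborel. g x * \<phi> x)"
  proof (intro bexI[OF _ g] ballI)
    fix \<phi> assume \<phi>: "\<phi> \<in> schwartz"
    have "(CLINT \<xi>|lborel. f \<xi> * FT \<phi> \<xi>) = (CLINT \<xi>|lborel. CLINT x|lborel. f \<xi> * (iexp (- (x * \<xi>)) * \<phi> x))"
      unfolding FT_def by simp
    also have "\<dots> = (CLINT x|lborel. CLINT \<xi>|lborel. f \<xi> * (iexp (- (x * \<xi>)) * \<phi> x))"
      by (rule fubini_iexp[where k="\<lambda>x \<xi>. - (x * \<xi>)", OF schwartz_integrable[OF \<phi>] schwartz_integrable[OF f]])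
         auto
    also have "\<dots> = (CLINT x|lborel. FT f x * \<phi> x)"
      unfolding FT_def by (simp add: mult.commute mult.left_commute)
    finally show "(CLINT x|lborel. f x * FT \<phi> x) = (CLINT x|lborel. FT f x * \<phi> x)" .
  qed
qed

lemma FT_refl: "\<phi> \<in> schwartz \<Longrightarrow> FT (dil (-1) \<phi>) \<xi> = FT \<phi> (- \<xi>)"
proof -
  have "FT \<phi> (- \<xi>) = \<bar>-1\<bar> *\<^sub>R (CLINT x|lborel. iexp (- ((0 + -1 * x) * (- \<xi>))) * \<phi> (0 + -1 * x))"
    unfolding FT_def by (rule lborel_integral_real_affine) simp
  also have "\<dots> = FT (dil (-1) \<phi>) \<xi>" unfolding FT_def dil_def by simp
  finally show ?thesis by simp
qed


lemma gauss_integrable: "integrable lborel (\<lambda>z. exp (- ((z::real)^2) / 2))"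
proof -
  have "integrable lborel (\<lambda>z. sqrt (2 * pi) * std_normal_density z)" by simp
  moreover have "(\<lambda>z. sqrt (2 * pi) * std_normal_density z) = (\<lambda>z. exp (- ((z::real)^2) / 2))"
    by (auto simp: std_normal_density_def)
  ultimately show ?thesis by simp
qed

lemma gauss_integrable_c: "integrable lborel (\<lambda>z. complex_of_real (exp (- ((z::real)^2) / 2)))"
  using gauss_integrable by simp

lemma gauss_int1: "(CLINT z|lborel. complex_of_real (exp (- (z^2) / 2)) * iexp (t * z)) = complex_of_real (sqrt (2 * pi) * exp (- (t^2) / 2))"
proof -
  have "char std_normal_distribution t = complex_of_real (exp (- (t^2) / 2))"
    by (simp add: char_std_normal_distribution)
  moreover have "char std_normal_distribution t = (CLINT x|lborel. std_normal_density x *\<^sub>R iexp (t * x))"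
    unfolding char_def by (rule integral_density) (auto simp: normal_density_nonneg)
  ultimately have 1: "(CLINT x|lborel. std_normal_density x *\<^sub>R iexp (t * x)) = complex_of_real (exp (- (t^2) / 2))" by simp
  have 2: "(\<lambda>z. complex_of_real (exp (- (z^2) / 2)) * iexp (t * z)) = (\<lambda>z. complex_of_real (sqrt (2 * pi)) * (std_normal_density z *\<^sub>R iexp (t * z)))"
    by (auto intro!: ext simp: std_normal_density_def scaleR_conv_of_real)
  show ?thesis unfolding 2 integral_mult_right_zero 1 by simp
qed

lemma gauss_FT:
  assumes e: "0 < \<epsilon>"
  shows "(CLINT \<xi>|lborel. iexp (- (\<xi> * t)) * complex_of_real (exp (- ((\<epsilon> * \<xi>)^2) / 2)))
       = complex_of_real (sqrt (2 * pi) / \<epsilon> * exp (- ((t / \<epsilon>)^2) / 2))"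
proof -
  have "(CLINT \<xi>|lborel. iexp (- (\<xi> * t)) * complex_of_real (exp (- ((\<epsilon> * \<xi>)^2) / 2)))
      = \<bar>1 / \<epsilon>\<bar> *\<^sub>R (CLINT z|lborel. iexp (- ((0 + 1 / \<epsilon> * z) * t)) * complex_of_real (exp (- ((\<epsilon> * (0 + 1 / \<epsilon> * z))^2) / 2)))"
    by (rule lborel_integral_real_affine) (use e in simp)
  also have "(\<lambda>z. iexp (- ((0 + 1 / \<epsilon> * z) * t)) * complex_of_real (exp (- ((\<epsilon> * (0 + 1 / \<epsilon> * z))^2) / 2)))
      = (\<lambda>z. complex_of_real (exp (- (z^2) / 2)) * iexp ((- t / \<epsilon>) * z))"
    using e by (auto intro!: ext simp: field_simps)
  also have "(CLINT z|lborel. complex_of_real (exp (- (z^2) / 2)) * iexp ((- t / \<epsilon>) * z))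
      = complex_of_real (sqrt (2 * pi) * exp (- ((- t / \<epsilon>)^2) / 2))" by (rule gauss_int1)
  finally show ?thesis using e by (simp add: scaleR_conv_of_real power_divide)
qed


lemma gauss_integrable_scaled: "0 < e \<Longrightarrow> integrable lborel (\<lambda>\<xi>. complex_of_real (exp (- ((e * \<xi>)^2) / 2)))"
  using lborel_integrable_real_affine[OF gauss_integrable_c, of e 0] by simp

lemma gauss_int0: "(CLINT z|lborel. complex_of_real (exp (- (z^2) / 2))) = complex_of_real (sqrt (2 * pi))"
  using gauss_int1[of 0] by simp

lemma FT_FT:
  assumes \<phi>: "\<phi> \<in> schwartz"
  shows "FT (FT \<phi>) x0 = complex_of_real (2 * pi) * \<phi> (- x0)"
proof -
  define e where "e n = inverse (real (Suc n))" for n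
  define G where "G n \<xi> = complex_of_real (exp (- ((e n * \<xi>)^2) / 2))" for n \<xi>
  have e_pos: "0 < e n" for n unfolding e_def by simp
  have e_lim: "e \<longlonglongrightarrow> 0" unfolding e_def by (rule LIMSEQ_inverse_real_of_nat)
  define F where "F = FT \<phi>"
  have F: "F \<in> schwartz" unfolding F_def using smap_FT \<phi> smapD1 by blast
  have [measurable]: "F \<in> borel_measurable lborel" "\<phi> \<in> borel_measurable lborel"
    using schwartz_borel F \<phi> by auto
  have Gint: "integrable lborel (G n)" for n unfolding G_def using gauss_integrable_scaled[OF e_pos] .
  have [measurable]: "G n \<in> borel_measurable lborel" for n unfolding G_def by measurable
  have Gle: "norm (G n \<xi>) \<le> 1" for n \<xi> unfolding G_def by simp
  have C1: "(\<lambda>n. CLINT \<xi>|lborel. iexp (- (\<xi> * x0)) * F \<xi> * G n \<xi>) \<longlonglongrightarrow> FT F x0"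
    unfolding FT_def
  proof (rule integral_dominated_convergence[where w="\<lambda>\<xi>. norm (F \<xi>)"])
    show "(\<lambda>\<xi>. iexp (- (\<xi> * x0)) * F \<xi>) \<in> borel_measurable lborel" by measurable
    show "(\<lambda>\<xi>. iexp (- (\<xi> * x0)) * F \<xi> * G n \<xi>) \<in> borel_measurable lborel" for n by measurable
    show "integrable lborel (\<lambda>\<xi>. norm (F \<xi>))" using schwartz_integrable[OF F] by auto
    show "AE \<xi> in lborel. (\<lambda>n. iexp (- (\<xi> * x0)) * F \<xi> * G n \<xi>) \<longlonglongrightarrow> iexp (- (\<xi> * x0)) * F \<xi>"
    proof (intro AE_I2)
      fix \<xi>
      have "(\<lambda>n. G n \<xi>) \<longlonglongrightarrow> complex_of_real (exp (- ((0 * \<xi>)^2) / 2))"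
        unfolding G_def by (intro tendsto_intros e_lim) simp_all
      then have "(\<lambda>n. iexp (- (\<xi> * x0)) * F \<xi> * G n \<xi>) \<longlonglongrightarrow> iexp (- (\<xi> * x0)) * F \<xi> * 1"
        by (intro tendsto_intros) simp
      then show "(\<lambda>n. iexp (- (\<xi> * x0)) * F \<xi> * G n \<xi>) \<longlonglongrightarrow> iexp (- (\<xi> * x0)) * F \<xi>" by simp
    qed
    show "AE \<xi> in lborel. norm (iexp (- (\<xi> * x0)) * F \<xi> * G n \<xi>) \<le> norm (F \<xi>)" for n
    proof (intro AE_I2)
      fix \<xi>
      have "norm (iexp (- (\<xi> * x0)) * F \<xi> * G n \<xi>) = norm (F \<xi>) * norm (G n \<xi>)" by (simp add: norm_mult)
      also have "\<dots> \<le> norm (F \<xi>) * 1" by (intro mult_left_mono Gle) auto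
      finally show "norm (iexp (- (\<xi> * x0)) * F \<xi> * G n \<xi>) \<le> norm (F \<xi>)" by simp
    qed
  qed
  define J where "J n = (CLINT z|lborel. \<phi> (- x0 + e n * z) * complex_of_real (sqrt (2 * pi) * exp (- (z^2) / 2)))" for n
  have C2: "(CLINT \<xi>|lborel. iexp (- (\<xi> * x0)) * F \<xi> * G n \<xi>) = J n" for n
  proof -
    have "(CLINT \<xi>|lborel. iexp (- (\<xi> * x0)) * F \<xi> * G n \<xi>)
        = (CLINT \<xi>|lborel. CLINT y|lborel. G n \<xi> * (iexp (- (y * \<xi>) - \<xi> * x0) * \<phi> y))"
    proof (rule Bochner_Integration.integral_cong[OF refl])
      fix \<xi>
      have "iexp (- (\<xi> * x0)) * F \<xi> * G n \<xi> = (G n \<xi> * iexp (- (\<xi> * x0))) * F \<xi>" by (simp add: mult_ac)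
      also have "\<dots> = (CLINT y|lborel. (G n \<xi> * iexp (- (\<xi> * x0))) * (iexp (- (y * \<xi>)) * \<phi> y))"
        unfolding F_def FT_def by (rule integral_mult_right_zero[symmetric])
      also have "\<dots> = (CLINT y|lborel. G n \<xi> * (iexp (- (y * \<xi>) - \<xi> * x0) * \<phi> y))"
        by (rule Bochner_Integration.integral_cong[OF refl]) (simp add: iexp_add[symmetric, simplified] mult_ac exp_add[symmetric] algebra_simps)
      finally show "iexp (- (\<xi> * x0)) * F \<xi> * G n \<xi> = (CLINT y|lborel. G n \<xi> * (iexp (- (y * \<xi>) - \<xi> * x0) * \<phi> y))" .
    qed
    also have "\<dots> = (CLINT y|lborel. CLINT \<xi>|lborel. G n \<xi> * (iexp (- (y * \<xi>) - \<xi> * x0) * \<phi> y))"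
      by (rule fubini_iexp[where k="\<lambda>y \<xi>. - (y * \<xi>) - \<xi> * x0", OF schwartz_integrable[OF \<phi>] Gint]) auto
    also have "\<dots> = (CLINT y|lborel. \<phi> y * complex_of_real (sqrt (2 * pi) / e n * exp (- (((x0 + y) / e n)^2) / 2)))"
    proof (rule Bochner_Integration.integral_cong[OF refl])
      fix y
      have "(CLINT \<xi>|lborel. G n \<xi> * (iexp (- (y * \<xi>) - \<xi> * x0) * \<phi> y))
          = \<phi> y * (CLINT \<xi>|lborel. iexp (- (\<xi> * (x0 + y))) * complex_of_real (exp (- ((e n * \<xi>)^2) / 2)))"
      proof -
        have "(CLINT \<xi>|lborel. G n \<xi> * (iexp (- (y * \<xi>) - \<xi> * x0) * \<phi> y))
           = (CLINT \<xi>|lborel. \<phi> y * (iexp (- (\<xi> * (x0 + y))) * complex_of_real (exp (- ((e n * \<xi>)^2) / 2))))"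
        proof (rule Bochner_Integration.integral_cong[OF refl])
          fix \<xi>
          have a: "- (y * \<xi>) - \<xi> * x0 = - (\<xi> * (x0 + y))" by (simp add: algebra_simps)
          show "G n \<xi> * (iexp (- (y * \<xi>) - \<xi> * x0) * \<phi> y)
             = \<phi> y * (iexp (- (\<xi> * (x0 + y))) * complex_of_real (exp (- ((e n * \<xi>)^2) / 2)))"
            unfolding a G_def by (simp only: mult_ac)
        qed
        then show ?thesis by simp
      qed
      also have "\<dots> = \<phi> y * complex_of_real (sqrt (2 * pi) / e n * exp (- (((x0 + y) / e n)^2) / 2))"
        by (simp only: gauss_FT[OF e_pos])
      finally show "(CLINT \<xi>|lborel. G n \<xi> * (iexp (- (y * \<xi>) - \<xi> * x0) * \<phi> y))
          = \<phi> y * complex_of_real (sqrt (2 * pi) / e n * exp (- (((x0 + y) / e n)^2) / 2))" .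
    qed
    also have "\<dots> = \<bar>e n\<bar> *\<^sub>R (CLINT z|lborel. \<phi> (- x0 + e n * z) * complex_of_real (sqrt (2 * pi) / e n * exp (- (((x0 + (- x0 + e n * z)) / e n)^2) / 2)))"
      by (rule lborel_integral_real_affine) (use e_pos[of n] in simp)
    also have "\<dots> = J n"
    proof -
      have "(\<lambda>z. \<phi> (- x0 + e n * z) * complex_of_real (sqrt (2 * pi) / e n * exp (- (((x0 + (- x0 + e n * z)) / e n)^2) / 2)))
          = (\<lambda>z. complex_of_real (1 / e n) * (\<phi> (- x0 + e n * z) * complex_of_real (sqrt (2 * pi) * exp (- (z^2) / 2))))"
        using e_pos[of n] by (auto intro!: ext simp: field_simps)
      then show ?thesis unfolding J_def using e_pos[of n] by (simp add: scaleR_conv_of_real)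
    qed
    finally show ?thesis .
  qed
  have C3: "J \<longlonglongrightarrow> (CLINT z|lborel. \<phi> (- x0) * complex_of_real (sqrt (2 * pi) * exp (- (z^2) / 2)))"
    unfolding J_def
  proof (rule integral_dominated_convergence[where w="\<lambda>z. sn 0 0 \<phi> * (sqrt (2 * pi) * exp (- (z^2) / 2))"])
    have [measurable]: "(\<lambda>z. - x0 + e n * z) \<in> borel_measurable lborel" for n by measurable
    show "(\<lambda>z. \<phi> (- x0) * complex_of_real (sqrt (2 * pi) * exp (- (z^2) / 2))) \<in> borel_measurable lborel" by measurable
    show "(\<lambda>z. \<phi> (- x0 + e n * z) * complex_of_real (sqrt (2 * pi) * exp (- (z^2) / 2))) \<in> borel_measurable lborel" for n
      by measurable
    show "integrable lborel (\<lambda>z. sn 0 0 \<phi> * (sqrt (2 * pi) * exp (- (z^2) / 2)))"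
      using gauss_integrable by auto
    have cont: "isCont \<phi> y" for y using schwartz_cont[OF \<phi>, of 0] by (simp add: continuous_on_eq_continuous_at)
    show "AE z in lborel. (\<lambda>n. \<phi> (- x0 + e n * z) * complex_of_real (sqrt (2 * pi) * exp (- (z^2) / 2)))
        \<longlonglongrightarrow> \<phi> (- x0) * complex_of_real (sqrt (2 * pi) * exp (- (z^2) / 2))"
    proof (intro AE_I2)
      fix z
      have "(\<lambda>n. - x0 + e n * z) \<longlonglongrightarrow> - x0 + 0 * z" by (intro tendsto_intros e_lim)
      then have "(\<lambda>n. \<phi> (- x0 + e n * z)) \<longlonglongrightarrow> \<phi> (- x0)"
        using isCont_tendsto_compose[OF cont] by simp
      then show "(\<lambda>n. \<phi> (- x0 + e n * z) * complex_of_real (sqrt (2 * pi) * exp (- (z^2) / 2)))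
        \<longlonglongrightarrow> \<phi> (- x0) * complex_of_real (sqrt (2 * pi) * exp (- (z^2) / 2))"
        by (intro tendsto_intros)
    qed
    show "AE z in lborel. norm (\<phi> (- x0 + e n * z) * complex_of_real (sqrt (2 * pi) * exp (- (z^2) / 2)))
        \<le> sn 0 0 \<phi> * (sqrt (2 * pi) * exp (- (z^2) / 2))" for n
    proof (intro AE_I2)
      fix z
      have "norm (\<phi> (- x0 + e n * z)) \<le> sn 0 0 \<phi>" using sn_upper[OF \<phi>, of "- x0 + e n * z" 0 0] by simp
      then show "norm (\<phi> (- x0 + e n * z) * complex_of_real (sqrt (2 * pi) * exp (- (z^2) / 2)))
        \<le> sn 0 0 \<phi> * (sqrt (2 * pi) * exp (- (z^2) / 2))"
      proof -
        have "norm (complex_of_real (sqrt (2 * pi) * exp (- (z^2) / 2))) = sqrt (2 * pi) * exp (- (z^2) / 2)"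
          by (simp only: norm_of_real) simp
        then show ?thesis unfolding norm_mult using \<open>norm (\<phi> (- x0 + e n * z)) \<le> sn 0 0 \<phi>\<close>
          by (simp add: mult_right_mono)
      qed
    qed
  qed
  have val: "(CLINT z|lborel. \<phi> (- x0) * complex_of_real (sqrt (2 * pi) * exp (- (z^2) / 2)))
      = complex_of_real (2 * pi) * \<phi> (- x0)"
  proof -
    have "(CLINT z|lborel. \<phi> (- x0) * complex_of_real (sqrt (2 * pi) * exp (- (z^2) / 2)))
        = (\<phi> (- x0) * complex_of_real (sqrt (2 * pi))) * (CLINT z|lborel. complex_of_real (exp (- (z^2) / 2)))"
      by (simp add: mult.assoc)
    also have "\<dots> = (\<phi> (- x0) * complex_of_real (sqrt (2 * pi))) * complex_of_real (sqrt (2 * pi))"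
      unfolding gauss_int0 ..
    also have "\<dots> = complex_of_real (2 * pi) * \<phi> (- x0)"
      by (simp add: mult_ac of_real_mult[symmetric])
    finally show ?thesis .
  qed
  have "(\<lambda>n. CLINT \<xi>|lborel. iexp (- (\<xi> * x0)) * F \<xi> * G n \<xi>) \<longlonglongrightarrow> complex_of_real (2 * pi) * \<phi> (- x0)"
  proof -
    have eqJ: "(\<lambda>n. CLINT \<xi>|lborel. iexp (- (\<xi> * x0)) * F \<xi> * G n \<xi>) = J" by (intro ext C2)
    show ?thesis unfolding eqJ using C3 unfolding val .
  qed
  from LIMSEQ_unique[OF C1 this] show ?thesis unfolding F_def .
qed


lemma stransp_comp:
  assumes "stransp A" "stransp B" "smap B"
  shows "stransp (\<lambda>\<phi>. A (B \<phi>))"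
  unfolding stransp_def
proof (intro ballI)
  fix f assume f: "f \<in> schwartz"
  obtain g1 where g1: "g1 \<in> schwartz" "\<forall>\<phi>\<in>schwartz. (CLINT x|lborel. f x * A \<phi> x) = (CLINT x|lborel. g1 x * \<phi> x)"
    using assms(1) f unfolding stransp_def by blast
  obtain g2 where g2: "g2 \<in> schwartz" "\<forall>\<phi>\<in>schwartz. (CLINT x|lborel. g1 x * B \<phi> x) = (CLINT x|lborel. g2 x * \<phi> x)"
    using assms(2) g1(1) unfolding stransp_def by blast
  show "\<exists>g\<in>schwartz. \<forall>\<phi>\<in>schwartz. (CLINT x|lborel. f x * A (B \<phi>) x) = (CLINT x|lborel. g x * \<phi> x)"
    using g1 g2 assms(3) smapD1 by (intro bexI[OF _ g2(1)]) auto
qed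

lemma stransp_scale:
  assumes "stransp A"
  shows "stransp (\<lambda>\<phi> x. c * A \<phi> x)"
  unfolding stransp_def
proof (intro ballI)
  fix f assume f: "f \<in> schwartz"
  have "\<exists>g\<in>schwartz. \<forall>\<phi>\<in>schwartz. (CLINT x|lborel. (\<lambda>x. c * f x) x * A \<phi> x) = (CLINT x|lborel. g x * \<phi> x)"
    using assms unfolding stransp_def by (rule bspec[OF _ schwartz_cmult[OF f]])
  then obtain g where g: "g \<in> schwartz" "\<forall>\<phi>\<in>schwartz. (CLINT x|lborel. (c * f x) * A \<phi> x) = (CLINT x|lborel. g x * \<phi> x)"
    by auto
  show "\<exists>g\<in>schwartz. \<forall>\<phi>\<in>schwartz. (CLINT x|lborel. f x * (c * A \<phi> x)) = (CLINT x|lborel. g x * \<phi> x)"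
    using g by (intro bexI[OF _ g(1)]) (simp add: mult_ac)
qed

lemma FT_x: "\<phi> \<in> schwartz \<Longrightarrow> (\<lambda>x. complex_of_real x * FT \<phi> x) = FT (\<lambda>x. (- \<i>) * dn 1 \<phi> x)"
proof -
  assume \<phi>: "\<phi> \<in> schwartz"
  have "FT (\<lambda>x. (- \<i>) * dn 1 \<phi> x) = (\<lambda>x. (- \<i>) * FT (dn 1 \<phi>) x)"
    by (rule slin_cmult[OF slin_FT schwartz_dn1[OF \<phi>]])
  also have "\<dots> = (\<lambda>x. ((- \<i>) * \<i>) * complex_of_real x * FT \<phi> x)" unfolding FT_dn1[OF \<phi>] by (simp add: mult.assoc)
  also have "\<dots> = (\<lambda>x. complex_of_real x * FT \<phi> x)" by simp
  finally show ?thesis by simp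
qed

definition Binv :: "(real \<Rightarrow> complex) \<Rightarrow> real \<Rightarrow> complex" where
  "Binv \<phi> = (\<lambda>x. complex_of_real (inverse (2 * pi)) * dil (-1) (FT \<phi>) x)"

lemma smap_Binv: "smap Binv"
  unfolding Binv_def[abs_def] by (rule smap_scale[OF smap_comp[OF smap_dil smap_FT]]) simp

lemma slin_Binv: "slin Binv"
  unfolding slin_def Binv_def dil_def using slin_FT
  by (auto simp: slin_add slin_cmult algebra_simps)

lemma stransp_Binv: "stransp Binv"
  unfolding Binv_def[abs_def] by (rule stransp_scale[OF stransp_comp[OF stransp_dil stransp_FT smap_FT]]) simp

lemma FT_Binv: "\<phi> \<in> schwartz \<Longrightarrow> FT (Binv \<phi>) = \<phi>"
proof -
  assume \<phi>: "\<phi> \<in> schwartz"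
  have F: "FT \<phi> \<in> schwartz" using smap_FT \<phi> smapD1 by blast
  have D: "dil (-1) (FT \<phi>) \<in> schwartz" using smap_dil[of "-1"] F smapD1 by auto
  have "FT (Binv \<phi>) = (\<lambda>\<xi>. complex_of_real (inverse (2 * pi)) * FT (dil (-1) (FT \<phi>)) \<xi>)"
    unfolding Binv_def by (rule slin_cmult[OF slin_FT D])
  also have "\<dots> = (\<lambda>\<xi>. complex_of_real (inverse (2 * pi)) * (complex_of_real (2 * pi) * \<phi> \<xi>))"
    using FT_refl[OF F] FT_FT[OF \<phi>] by simp
  also have "\<dots> = \<phi>" by (auto intro!: ext simp: mult.assoc[symmetric] of_real_mult[symmetric])
  finally show ?thesis .
qed

lemma Binv_FT: "\<phi> \<in> schwartz \<Longrightarrow> Binv (FT \<phi>) = \<phi>"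
proof -
  assume \<phi>: "\<phi> \<in> schwartz"
  have "Binv (FT \<phi>) = (\<lambda>x. complex_of_real (inverse (2 * pi)) * (complex_of_real (2 * pi) * \<phi> x))"
    unfolding Binv_def dil_def using FT_FT[OF \<phi>] by simp
  also have "\<dots> = \<phi>" by (auto intro!: ext simp: mult.assoc[symmetric] of_real_mult[symmetric])
  finally show ?thesis .
qed

lemma gJ: "goodM 0 (-1) 1 0"
proof (rule generator[where A=FT and B=Binv and D="\<lambda>\<phi> x. (- \<i>) * (complex_of_real x * \<phi> x)"
      and E="\<lambda>\<phi> x. (- \<i>) * dn 1 \<phi> x"])
  show "smap FT" "slin FT" "stransp FT" by (auto simp: smap_FT slin_FT stransp_FT)
  show "smap Binv" "slin Binv" "stransp Binv" by (auto simp: smap_Binv slin_Binv stransp_Binv)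
  show "\<phi> \<in> schwartz \<Longrightarrow> FT (Binv \<phi>) = \<phi>" for \<phi> by (rule FT_Binv)
  show "\<phi> \<in> schwartz \<Longrightarrow> Binv (FT \<phi>) = \<phi>" for \<phi> by (rule Binv_FT)
  show "dn 1 (FT \<phi>) = FT (\<lambda>x. (- \<i>) * (complex_of_real x * \<phi> x))" if "\<phi> \<in> schwartz" for \<phi>
    using FT_deriv[OF that] by (auto intro!: ext vector_derivative_at simp: dn.simps)
  show "smap (\<lambda>\<phi> x. (- \<i>) * (complex_of_real x * \<phi> x))" by (rule smap_scale[OF smap_x])
  show "smap (\<lambda>\<phi> x. (- \<i>) * dn 1 \<phi> x)" by (rule smap_scale[OF smap_dn1])
  show "\<phi> \<in> schwartz \<Longrightarrow> (\<lambda>x. complex_of_real x * FT \<phi> x) = FT (\<lambda>x. (- \<i>) * dn 1 \<phi> x)" for \<phi>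
    by (rule FT_x)
  fix p :: "nat \<Rightarrow> nat \<Rightarrow> complex" and \<phi> assume \<phi>: "\<phi> \<in> schwartz"
  have d1: "dn 1 (\<lambda>x. (- \<i>) * dn 1 \<phi> x) = (\<lambda>x. (- \<i>) * dn 2 \<phi> x)" by (rule dn1_cdn1[OF \<phi>])
  have d2: "dn 1 (\<lambda>x. (- \<i>) * (complex_of_real x * \<phi> x)) = (\<lambda>x. (- \<i>) * (\<phi> x + complex_of_real x * dn 1 \<phi> x))"
    using dn_cmult[OF schwartz_xmult[OF \<phi>], of 1 "- \<i>"] dn1_x[OF \<phi>] by simp
  show "(\<lambda>x. p 0 0 * \<phi> x + p 0 1 * (- \<i> * dn 1 \<phi> x) + p 0 2 * (- \<i> * dn 1 (\<lambda>x. - \<i> * dn 1 \<phi> x) x)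
     + \<i> * p 1 0 * (- \<i> * (complex_of_real x * \<phi> x))
     + \<i> * p 1 1 * (\<phi> x + - \<i> * dn 1 (\<lambda>x. - \<i> * (complex_of_real x * \<phi> x)) x)
     + - p 2 0 * (- \<i> * (complex_of_real x * (- \<i> * (complex_of_real x * \<phi> x))))) =
     Lc (cmp p 0 (- 1) 1 0) \<phi>"
    unfolding d1 d2 Lc_def cmp_def Let_def
    by (rule ext) (simp add: power2_eq_square algebra_simps)
qed


theorem proposition4p6:
  fixes \<alpha> \<beta> \<gamma> \<delta> :: real
    and a bc :: "nat \<Rightarrow> nat \<Rightarrow> complex"
  assumes "\<alpha> * \<delta> - \<beta> * \<gamma> = 1"
    and "\<beta> * \<delta> \<noteq> 0"
    and "norm (a 2 0) + norm (a 1 1) + norm (a 0 2) \<noteq> 0"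
    and "bc 2 0 \<noteq> 0"
    and "sympl_equiv (weyl_symbol a) (weyl_symbol bc)"
  shows "(kernel_trivial (op_of a) \<longleftrightarrow> kernel_trivial (op_of bc))
       \<and> (globally_regular (op_of a) \<longleftrightarrow> globally_regular (op_of bc))
       \<and> (globally_regular (op_transpose a) \<longleftrightarrow> globally_regular (op_transpose bc))"
proof -
  obtain m11 m12 m21 m22 :: real where det: "m11 * m22 - m12 * m21 = 1"
    and w: "\<And>x \<xi>. weyl_symbol bc x \<xi> = weyl_symbol a (m11 * x + m12 * \<xi>) (m21 * x + m22 * \<xi>)"
    using assms(5) unfolding sympl_equiv_def by blast
  have G: "goodM a b c d" if "a * d - b * c = 1" for a b c d
    by (rule goodM_all[OF gD gS gJ that])
  have E1: "EqL (Lc a) (Lc bc)" using G[OF det] w unfolding goodM_def by blast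
  have w2: "weyl_symbol (trc bc) x \<xi> = weyl_symbol (trc a) (m11 * x + (- m12) * \<xi>) ((- m21) * x + m22 * \<xi>)" for x \<xi>
    unfolding weyl_trc w by (simp add: algebra_simps)
  have E2: "EqL (Lc (trc a)) (Lc (trc bc))" using G[of m11 m22 "- m12" "- m21"] det w2 unfolding goodM_def by auto
  have o1: "(kernel_trivial (op_of c) \<longleftrightarrow> kernel_trivial (OpL (Lc c))) \<and> (globally_regular (op_of c) \<longleftrightarrow> globally_regular (OpL (Lc c)))" for c
    by (rule equiv_ops) (simp add: op_of_eq OpL_def)
  have o2: "(kernel_trivial (op_transpose c) \<longleftrightarrow> kernel_trivial (OpL (Lc (trc c)))) \<and> (globally_regular (op_transpose c) \<longleftrightarrow> globally_regular (OpL (Lc (trc c))))" for c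
    by (rule equiv_ops) (simp add: op_transpose_eq OpL_def)
  show ?thesis using E1 E2 o1 o2 unfolding EqL_def by blast
qed


end
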